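(* Let $f,g,h$ be smooth real functions of one variable satisfying $f\neq 0$, $g\neq 0$, $g'\neq 0$ (where $'$ denotes $d/du$), and consider the generalized Kudryashov–Sinelshchikov equation $$\mathfrak{F}:=u_t-f(u)u_x-g(u)u_{xx}+h(u)u_x^2=0$$ for $u=u(t,x)$. Then this equation is nonlinearly self-adjoint. Moreover, writing $E(u):=\exp\left(-\int \frac{g'(u)+h(u)}{g(u)}\,du\right)$: (i) If $f(u)=a\,g(u)+b$ with constants $a,b$, and $f$ itself is not a constant, then the substitution is given by $$\phi(t,x,u)=\big(c_1\exp(ax+abt)+c_2\big)E(u).$$ (ii) If $f(u)=b$ is a constant, then the substitution is given by $$\phi(t,x,u)=\big(c_3(x+bt)+c_4\big)E(u).$$ (iii) In all remaining cases, the substitution is $\phi(u)=c_5\,E(u)$. Here $c_1,\dots,c_5$ are constants with $(c_1,c_2)\neq(0,0)$, $(c_3,c_4)\neq(0,0)$, $c_5\neq 0$.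
   Context: For a differential equation $\mathfrak{F}[u]=0$ in independent variables $t,x$ and dependent variable $u$, introduce a new dependent variable $\nu=\nu(t,x)$ (the adjoint variable). The formal Lagrangian is $\mathfrak{L}=\nu\mathfrak{F}$, and the adjoint differential function is $\mathfrak{F}^*=\frac{\delta\mathfrak{L}}{\delta u}$, where for a second-order $\mathfrak{F}$ the Euler operator is $\frac{\delta}{\delta u}=\frac{\partial}{\partial u}-D_t\frac{\partial}{\partial u_t}-D_x\frac{\partial}{\partial u_x}+D_x^2\frac{\partial}{\partial u_{xx}}$ (plus the corresponding mixed/other second-derivative terms if present), with $D_t,D_x$ the total derivative operators. The equation $\mathfrak{F}=0$ is called nonlinearly self-adjoint if there is a substitution $\nu=\phi(t,x,u)\neq 0$ (with derivatives of $\nu$ replaced by the corresponding total derivatives of $\phi$) such that $\mathfrak{F}^*|_{\nu=\phi(t,x,u)}=\lambda\mathfrak{F}$ for some coefficient $\lambda=\lambda(t,x,u,\dots)$. If $\phi$ depends only on $u$, the equation is called quasi self-adjoint; if $\phi=u$ works, it is called strictly self-adjoint. The antiderivative in $E(u)$ is any fixed antiderivative. *)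

theory Defs
  imports "HOL-Analysis.Analysis"
begin

(* C^infinity: every iterated directional (Frechet) derivative exists and is
   Frechet differentiable everywhere. *)
definition iter_dir_deriv :: "'a::real_normed_vector list \<Rightarrow> ('a \<Rightarrow> real) \<Rightarrow> 'a \<Rightarrow> real" where
  "iter_dir_deriv ds v = foldr (\<lambda>d w. \<lambda>q. frechet_derivative w (at q) d) ds v"

definition smooth_fun :: "('a::real_normed_vector \<Rightarrow> real) \<Rightarrow> bool" where
  "smooth_fun v \<longleftrightarrow> (\<forall>ds p. iter_dir_deriv ds v differentiable (at p))"

(* partial derivatives of a function of (t,x): True = d/dt, False = d/dx *)
definition pd :: "bool \<Rightarrow> (real \<times> real \<Rightarrow> real) \<Rightarrow> real \<times> real \<Rightarrow> real" where
  "pd b v = (\<lambda>p. if b then deriv (\<lambda>s. v (s, snd p)) (fst p)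
                       else deriv (\<lambda>s. v (fst p, s)) (snd p))"

definition jet :: "(real \<times> real \<Rightarrow> real) \<Rightarrow> real \<times> real \<Rightarrow> (bool list \<Rightarrow> real)" where
  "jet u p = (\<lambda>ds. foldr pd ds u p)"

(* second-order jet coordinates used for differential functions / Lagrangians:
   0:t 1:x 2:u 3:u_t 4:u_x 5:u_tt 6:u_tx 7:u_xx 8:nu *)
definition jet2 :: "(real \<times> real \<Rightarrow> real) \<Rightarrow> (real \<times> real \<Rightarrow> real) \<Rightarrow> real \<times> real \<Rightarrow> nat \<Rightarrow> real" where
  "jet2 u \<nu> p = (\<lambda>k. if k = 0 then fst p else if k = 1 then snd p else if k = 2 then u p
      else if k = 3 then pd True u p else if k = 4 then pd False u p
      else if k = 5 then pd True (pd True u) p else if k = 6 then pd True (pd False u) p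
      else if k = 7 then pd False (pd False u) p else if k = 8 then \<nu> p else 0)"

definition pdj :: "nat \<Rightarrow> ((nat \<Rightarrow> real) \<Rightarrow> real) \<Rightarrow> (nat \<Rightarrow> real) \<Rightarrow> real" where
  "pdj k L z = deriv (\<lambda>s. L (z(k := s))) (z k)"

(* Euler operator delta/delta u applied to a second-order Lagrangian L, evaluated
   along u(t,x), nu(t,x); total derivatives along the prolongation are the
   partial derivatives of the composite functions. *)
definition euler_u :: "((nat \<Rightarrow> real) \<Rightarrow> real) \<Rightarrow> (real \<times> real \<Rightarrow> real) \<Rightarrow> (real \<times> real \<Rightarrow> real) \<Rightarrow> real \<times> real \<Rightarrow> real" where
  "euler_u L u \<nu> p =
     pdj 2 L (jet2 u \<nu> p)
     - pd True (\<lambda>q. pdj 3 L (jet2 u \<nu> q)) p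
     - pd False (\<lambda>q. pdj 4 L (jet2 u \<nu> q)) p
     + pd True (pd True (\<lambda>q. pdj 5 L (jet2 u \<nu> q))) p
     + pd True (pd False (\<lambda>q. pdj 6 L (jet2 u \<nu> q))) p
     + pd False (pd False (\<lambda>q. pdj 7 L (jet2 u \<nu> q))) p"

definition KS :: "(real \<Rightarrow> real) \<Rightarrow> (real \<Rightarrow> real) \<Rightarrow> (real \<Rightarrow> real) \<Rightarrow> (nat \<Rightarrow> real) \<Rightarrow> real" where
  "KS f g h z = z 3 - f (z 2) * z 4 - g (z 2) * z 7 + h (z 2) * (z 4)\<^sup>2"

definition KS_lag :: "(real \<Rightarrow> real) \<Rightarrow> (real \<Rightarrow> real) \<Rightarrow> (real \<Rightarrow> real) \<Rightarrow> (nat \<Rightarrow> real) \<Rightarrow> real" where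
  "KS_lag f g h z = z 8 * KS f g h z"

(* phi(t,x,u) is an admissible substitution: smooth, not identically zero, and
   F^*|_{nu = phi} = lambda F for a coefficient lambda depending on t, x and the
   jet of u (identity required along every smooth u). *)
definition KS_subst :: "(real \<Rightarrow> real) \<Rightarrow> (real \<Rightarrow> real) \<Rightarrow> (real \<Rightarrow> real) \<Rightarrow> (real \<Rightarrow> real \<Rightarrow> real \<Rightarrow> real) \<Rightarrow> bool" where
  "KS_subst f g h \<phi> \<longleftrightarrow>
     smooth_fun (\<lambda>(t, x, w). \<phi> t x w) \<and> \<phi> \<noteq> (\<lambda>t x w. 0) \<and>
     (\<exists>\<Lambda> :: real \<Rightarrow> real \<Rightarrow> (bool list \<Rightarrow> real) \<Rightarrow> real.
        \<forall>u. smooth_fun u \<longrightarrow> (\<forall>p.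
          euler_u (KS_lag f g h) u (\<lambda>q. \<phi> (fst q) (snd q) (u q)) p
            = \<Lambda> (fst p) (snd p) (jet u p) * KS f g h (jet2 u (\<lambda>q. \<phi> (fst q) (snd q) (u q)) p)))"

definition KS_nonlin_self_adjoint :: "(real \<Rightarrow> real) \<Rightarrow> (real \<Rightarrow> real) \<Rightarrow> (real \<Rightarrow> real) \<Rightarrow> bool" where
  "KS_nonlin_self_adjoint f g h \<longleftrightarrow> (\<exists>\<phi>. KS_subst f g h \<phi>)"

end

theory Submission
  imports Defs
begin

lemma iter_dir_deriv_snoc:
  "iter_dir_deriv (ds @ [d]) v = iter_dir_deriv ds (\<lambda>q. frechet_derivative v (at q) d)"
  by (simp add: iter_dir_deriv_def)

lemma iter_dir_deriv_Nil[simp]: "iter_dir_deriv [] v = v"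
  by (simp add: iter_dir_deriv_def)

lemma smooth_fun_iff:
  "smooth_fun v \<longleftrightarrow> (\<forall>p. v differentiable (at p)) \<and> (\<forall>d. smooth_fun (\<lambda>q. frechet_derivative v (at q) d))"
proof
  assume s: "smooth_fun v"
  have "\<forall>p. v differentiable (at p)"
    using s unfolding smooth_fun_def by (metis iter_dir_deriv_Nil)
  moreover have "\<forall>d. smooth_fun (\<lambda>q. frechet_derivative v (at q) d)"
    using s unfolding smooth_fun_def by (metis iter_dir_deriv_snoc)
  ultimately show "(\<forall>p. v differentiable (at p)) \<and> (\<forall>d. smooth_fun (\<lambda>q. frechet_derivative v (at q) d))" ..
next
  assume a: "(\<forall>p. v differentiable (at p)) \<and> (\<forall>d. smooth_fun (\<lambda>q. frechet_derivative v (at q) d))"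
  show "smooth_fun v"
    unfolding smooth_fun_def
  proof (intro allI)
    fix ds p
    show "iter_dir_deriv ds v differentiable at p"
    proof (cases ds rule: rev_exhaust)
      case Nil then show ?thesis using a by simp
    next
      case (snoc ys y)
      then show ?thesis using a unfolding smooth_fun_def by (simp add: iter_dir_deriv_snoc)
    qed
  qed
qed

lemma smooth_coinduct:
  assumes "S v"
    and "\<And>v. S v \<Longrightarrow> (\<forall>p. v differentiable (at p)) \<and> (\<forall>d. S (\<lambda>q. frechet_derivative v (at q) d))"
  shows "smooth_fun v"
proof -
  have "\<forall>v. S v \<longrightarrow> (\<forall>p. iter_dir_deriv ds v differentiable (at p))" for ds
  proof (induction ds rule: rev_induct)
    case Nil then show ?case using assms(2) by simp
  next
    case (snoc y ys)
    then show ?case using assms(2) by (simp add: iter_dir_deriv_snoc)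
  qed
  then show ?thesis using assms(1) unfolding smooth_fun_def by blast
qed

lemma smooth_diff: "smooth_fun v \<Longrightarrow> v differentiable (at p)"
  using smooth_fun_iff by blast

lemma smooth_D: "smooth_fun v \<Longrightarrow> smooth_fun (\<lambda>q. frechet_derivative v (at q) d)"
  using smooth_fun_iff by blast

lemma fd_has: "v differentiable (at p) \<Longrightarrow> (v has_derivative frechet_derivative v (at p)) (at p)"
  using frechet_derivative_works by blast

lemma fd_real:
  fixes F :: "real \<Rightarrow> real"
  assumes "F differentiable (at x)"
  shows "frechet_derivative F (at x) d = deriv F x * d"
proof -
  have "(F has_real_derivative deriv F x) (at x)"
    using assms DERIV_deriv_iff_real_differentiable by blast
  then have "(F has_derivative (\<lambda>h. deriv F x * h)) (at x)"
    by (simp add: has_field_derivative_def)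
  then show ?thesis using frechet_derivative_at by metis
qed

lemma smooth_real_deriv:
  fixes F :: "real \<Rightarrow> real"
  assumes "smooth_fun F"
  shows "smooth_fun (deriv F)" "(F has_real_derivative deriv F x) (at x)"
proof -
  have "smooth_fun (\<lambda>q. frechet_derivative F (at q) 1)" using smooth_D[OF assms] .
  moreover have "(\<lambda>q. frechet_derivative F (at q) 1) = deriv F"
    using fd_real smooth_diff[OF assms] by auto
  ultimately show "smooth_fun (deriv F)" by simp
  show "(F has_real_derivative deriv F x) (at x)"
    using assms smooth_diff DERIV_deriv_iff_real_differentiable by blast
qed

inductive_set alg :: "('a::real_normed_vector \<Rightarrow> real) set" where
  base: "smooth_fun v \<Longrightarrow> v \<in> alg"
| const: "(\<lambda>q. c) \<in> alg"
| lin: "bounded_linear l \<Longrightarrow> l \<in> alg"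
| add: "u \<in> alg \<Longrightarrow> v \<in> alg \<Longrightarrow> (\<lambda>q. u q + v q) \<in> alg"
| mult: "u \<in> alg \<Longrightarrow> v \<in> alg \<Longrightarrow> (\<lambda>q. u q * v q) \<in> alg"
| comp: "smooth_fun (F :: real \<Rightarrow> real) \<Longrightarrow> v \<in> alg \<Longrightarrow> (\<lambda>q. F (v q)) \<in> alg"
| inv: "v \<in> alg \<Longrightarrow> (\<forall>q. v q \<noteq> 0) \<Longrightarrow> (\<lambda>q. inverse (v q)) \<in> alg"

lemma alg_diff: "v \<in> alg \<Longrightarrow> v differentiable (at p)"
proof (induction v arbitrary: p rule: alg.induct)
  case (base v) then show ?case by (rule smooth_diff)
next
  case (const c) then show ?case by simp
next
  case (lin l) then show ?case by (simp add: bounded_linear_imp_differentiable)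
next
  case (add u v) then show ?case by (simp add: differentiable_add)
next
  case (mult u v) then show ?case by (simp add: differentiable_mult)
next
  case (comp F v)
  then show ?case using smooth_diff[OF comp(1)] differentiable_chain_at[of v p F] by (simp add: o_def)
next
  case (inv v)
  then show ?case by (simp add: differentiable_inverse)
qed

lemma alg_D: "v \<in> alg \<Longrightarrow> (\<lambda>q. frechet_derivative v (at q) d) \<in> alg"
proof (induction v rule: alg.induct)
  case (base v) then show ?case by (simp add: smooth_D alg.base)
next
  case (const c)
  have "frechet_derivative (\<lambda>q. c) (at q) = (\<lambda>x. 0)" for q :: 'a
    by (rule sym, rule frechet_derivative_at) simp
  then have e: "(\<lambda>q. frechet_derivative (\<lambda>q. c) (at q) d) = (\<lambda>q. 0)" by simp
  show ?case unfolding e by (rule alg.const)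
next
  case (lin l)
  have "frechet_derivative l (at q) = l" for q
    using frechet_derivative_at[OF bounded_linear.has_derivative[OF lin has_derivative_ident]] by simp
  then have e: "(\<lambda>q. frechet_derivative l (at q) d) = (\<lambda>q. l d)" by simp
  show ?case unfolding e by (rule alg.const)
next
  case (add u v)
  have "frechet_derivative (\<lambda>q. u q + v q) (at q) = (\<lambda>h. frechet_derivative u (at q) h + frechet_derivative v (at q) h)" for q
    using frechet_derivative_at[OF has_derivative_add[OF fd_has[OF alg_diff[OF add(1)]] fd_has[OF alg_diff[OF add(2)]]]]
    by simp
  then have e: "(\<lambda>q. frechet_derivative (\<lambda>q. u q + v q) (at q) d) = (\<lambda>q. frechet_derivative u (at q) d + frechet_derivative v (at q) d)"
    by simp
  show ?case unfolding e by (rule alg.add[OF add(3) add(4)])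
next
  case (mult u v)
  have "frechet_derivative (\<lambda>q. u q * v q) (at q) = (\<lambda>h. u q * frechet_derivative v (at q) h + frechet_derivative u (at q) h * v q)" for q
    using frechet_derivative_at[OF has_derivative_mult[OF fd_has[OF alg_diff[OF mult(1)]] fd_has[OF alg_diff[OF mult(2)]]]]
    by simp
  then have e: "(\<lambda>q. frechet_derivative (\<lambda>q. u q * v q) (at q) d) = (\<lambda>q. u q * frechet_derivative v (at q) d + frechet_derivative u (at q) d * v q)"
    by simp
  show ?case unfolding e by (rule alg.add[OF alg.mult[OF mult(1) mult(4)] alg.mult[OF mult(3) mult(2)]])
next
  case (comp F v)
  have "frechet_derivative (\<lambda>q. F (v q)) (at q) = (\<lambda>h. frechet_derivative v (at q) h * deriv F (v q))" for q
    using frechet_derivative_at[OF DERIV_compose_FDERIV[OF smooth_real_deriv(2)[OF comp(1)] fd_has[OF alg_diff[OF comp(2)]]]]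
    by simp
  then have e: "(\<lambda>q. frechet_derivative (\<lambda>q. F (v q)) (at q) d) = (\<lambda>q. frechet_derivative v (at q) d * deriv F (v q))"
    by simp
  show ?case unfolding e by (rule alg.mult[OF comp(3) alg.comp[OF smooth_real_deriv(1)[OF comp(1)] comp(2)]])
next
  case (inv v)
  have "frechet_derivative (\<lambda>q. inverse (v q)) (at q) = (\<lambda>h. - (inverse (v q) * frechet_derivative v (at q) h * inverse (v q)))" for q
    using frechet_derivative_at[OF Deriv.has_derivative_inverse[OF _ fd_has[OF alg_diff[OF inv(1)]]]] inv(2)
    by simp
  then have e: "(\<lambda>q. frechet_derivative (\<lambda>q. inverse (v q)) (at q) d) = (\<lambda>q. -1 * ((inverse (v q) * frechet_derivative v (at q) d) * inverse (v q)))"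
    by simp
  have iv: "(\<lambda>q. inverse (v q)) \<in> alg" using inv by (simp add: alg.inv)
  show ?case unfolding e by (rule alg.mult[OF alg.const alg.mult[OF alg.mult[OF iv inv(3)] iv]])
qed

lemma alg_smooth: "v \<in> alg \<Longrightarrow> smooth_fun v"
proof (rule smooth_coinduct[where S = "\<lambda>v. v \<in> alg"])
  fix w :: "'a \<Rightarrow> real" assume "w \<in> alg"
  then show "(\<forall>p. w differentiable (at p)) \<and> (\<forall>d. (\<lambda>q. frechet_derivative w (at q) d) \<in> alg)"
    using alg_diff alg_D by blast
qed

lemma smooth_exp: "smooth_fun (\<lambda>x::real. exp x)"
proof (rule smooth_coinduct[where S = "\<lambda>v. \<exists>c. v = (\<lambda>x::real. c * exp x)"])
  show "\<exists>c. (\<lambda>x::real. exp x) = (\<lambda>x. c * exp x)" by (rule exI[of _ 1]) simp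
next
  fix v :: "real \<Rightarrow> real" assume "\<exists>c. v = (\<lambda>x. c * exp x)"
  then obtain c where v: "v = (\<lambda>x. c * exp x)" by blast
  have d: "(v has_real_derivative c * exp x) (at x)" for x
    unfolding v by (auto intro!: derivative_eq_intros)
  then have "v differentiable (at x)" for x using real_differentiable_def by blast
  moreover have "frechet_derivative v (at q) d = (c * d) * exp q" for q d
  proof -
    have "deriv v q = c * exp q" using d[of q] by (rule DERIV_imp_deriv)
    then show ?thesis using fd_real[of v q d] \<open>\<And>x. v differentiable (at x)\<close> by simp
  qed
  ultimately show "(\<forall>p. v differentiable (at p)) \<and> (\<forall>d. \<exists>c. (\<lambda>q. frechet_derivative v (at q) d) = (\<lambda>x. c * exp x))"
    by auto
qed

lemma path_deriv:
  fixes v :: "'a::real_normed_vector \<Rightarrow> real"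
  assumes "v differentiable (at (c s))" "(c has_vector_derivative c') (at s)"
  shows "((\<lambda>r. v (c r)) has_real_derivative frechet_derivative v (at (c s)) c') (at s)"
proof -
  have c: "(c has_derivative (\<lambda>h. h *\<^sub>R c')) (at s)" using assms(2) by (simp add: has_vector_derivative_def)
  have v: "(v has_derivative frechet_derivative v (at (c s))) (at (c s))" using fd_has[OF assms(1)] .
  have bl: "bounded_linear (frechet_derivative v (at (c s)))" using has_derivative_bounded_linear[OF v] .
  have "((\<lambda>r. v (c r)) has_derivative (\<lambda>h. frechet_derivative v (at (c s)) (h *\<^sub>R c'))) (at s)"
    using has_derivative_compose[OF c v] .
  moreover have "(\<lambda>h. frechet_derivative v (at (c s)) (h *\<^sub>R c')) = (\<lambda>h. frechet_derivative v (at (c s)) c' * h)"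
    using linear_scale[OF bounded_linear.linear[OF bl]] by (auto simp: mult.commute)
  ultimately show ?thesis by (simp add: has_field_derivative_def)
qed

lemma line_x:
  fixes v :: "real \<times> real \<Rightarrow> real"
  assumes "v differentiable (at (t, s))"
  shows "((\<lambda>r. v (t, r)) has_real_derivative frechet_derivative v (at (t, s)) (0, 1)) (at s)"
proof -
  have "((\<lambda>r. (t, r)) has_vector_derivative (0, 1)) (at s)"
    by (auto intro!: derivative_eq_intros)
  then show ?thesis using path_deriv[of v "\<lambda>r. (t, r)" s "(0,1)"] assms by simp
qed

lemma line_t:
  fixes v :: "real \<times> real \<Rightarrow> real"
  assumes "v differentiable (at (s, x))"
  shows "((\<lambda>r. v (r, x)) has_real_derivative frechet_derivative v (at (s, x)) (1, 0)) (at s)"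
proof -
  have "((\<lambda>r. (r, x)) has_vector_derivative (1, 0)) (at s)"
    by (auto intro!: derivative_eq_intros)
  then show ?thesis using path_deriv[of v "\<lambda>r. (r, x)" s "(1,0)"] assms by simp
qed

lemma pd_F: "v differentiable (at q) \<Longrightarrow> pd False v q = frechet_derivative v (at q) (0, 1)"
  using line_x[of v "fst q" "snd q"] by (simp add: pd_def DERIV_imp_deriv)

lemma pd_T: "v differentiable (at q) \<Longrightarrow> pd True v q = frechet_derivative v (at q) (1, 0)"
  using line_t[of v "fst q" "snd q"] by (simp add: pd_def DERIV_imp_deriv)

lemma pdF_fun: "smooth_fun v \<Longrightarrow> pd False v = (\<lambda>q. frechet_derivative v (at q) (0, 1))"
  using pd_F smooth_diff by blast

lemma pdT_fun: "smooth_fun v \<Longrightarrow> pd True v = (\<lambda>q. frechet_derivative v (at q) (1, 0))"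
  using pd_T smooth_diff by blast

lemma smooth_pd: "smooth_fun v \<Longrightarrow> smooth_fun (pd b v)"
  by (cases b) (simp_all add: pdF_fun pdT_fun smooth_D)

lemma smooth_line_x: "smooth_fun v \<Longrightarrow> ((\<lambda>r. v (t, r)) has_real_derivative pd False v (t, s)) (at s)"
  using line_x[of v t s] smooth_diff pd_F by metis

lemma smooth_line_t: "smooth_fun v \<Longrightarrow> ((\<lambda>r. v (r, x)) has_real_derivative pd True v (s, x)) (at s)"
  using line_t[of v s x] smooth_diff pd_T by metis

lemma pd_const: "pd b (\<lambda>q. 0) = (\<lambda>q. 0)"
  by (auto simp: pd_def)

context
  fixes f g h :: "real \<Rightarrow> real"
  assumes df: "\<And>x. f differentiable (at x)" and dg: "\<And>x. g differentiable (at x)"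
    and dh: "\<And>x. h differentiable (at x)"
begin

lemma Df: "(f has_real_derivative deriv f x) (at x)" using df DERIV_deriv_iff_real_differentiable by blast
lemma Dg: "(g has_real_derivative deriv g x) (at x)" using dg DERIV_deriv_iff_real_differentiable by blast
lemma Dh: "(h has_real_derivative deriv h x) (at x)" using dh DERIV_deriv_iff_real_differentiable by blast

lemma pdj2: "pdj 2 (KS_lag f g h) z = z 8 * (- deriv f (z 2) * z 4 - deriv g (z 2) * z 7 + deriv h (z 2) * (z 4)\<^sup>2)"
proof -
  have "((\<lambda>s. KS_lag f g h (z(2 := s))) has_real_derivative z 8 * (- deriv f (z 2) * z 4 - deriv g (z 2) * z 7 + deriv h (z 2) * (z 4)\<^sup>2)) (at (z 2))"
    unfolding KS_lag_def KS_def
    by (auto intro!: derivative_eq_intros Df Dg Dh simp: algebra_simps)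
  then show ?thesis unfolding pdj_def by (rule DERIV_imp_deriv)
qed

lemma pdj3: "pdj 3 (KS_lag f g h) z = z 8"
proof -
  have "((\<lambda>s. KS_lag f g h (z(3 := s))) has_real_derivative z 8) (at (z 3))"
    unfolding KS_lag_def KS_def
    by (auto intro!: derivative_eq_intros)
  then show ?thesis unfolding pdj_def by (rule DERIV_imp_deriv)
qed

lemma pdj4: "pdj 4 (KS_lag f g h) z = z 8 * (- f (z 2) + 2 * h (z 2) * z 4)"
proof -
  have "((\<lambda>s. KS_lag f g h (z(4 := s))) has_real_derivative z 8 * (- f (z 2) + 2 * h (z 2) * z 4)) (at (z 4))"
    unfolding KS_lag_def KS_def
    by (auto intro!: derivative_eq_intros simp: algebra_simps)
  then show ?thesis unfolding pdj_def by (rule DERIV_imp_deriv)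
qed

lemma pdj5: "pdj 5 (KS_lag f g h) z = 0"
proof -
  have "((\<lambda>s. KS_lag f g h (z(5 := s))) has_real_derivative 0) (at (z 5))"
    unfolding KS_lag_def KS_def
    by (auto intro!: derivative_eq_intros)
  then show ?thesis unfolding pdj_def by (rule DERIV_imp_deriv)
qed

lemma pdj6: "pdj 6 (KS_lag f g h) z = 0"
proof -
  have "((\<lambda>s. KS_lag f g h (z(6 := s))) has_real_derivative 0) (at (z 6))"
    unfolding KS_lag_def KS_def
    by (auto intro!: derivative_eq_intros)
  then show ?thesis unfolding pdj_def by (rule DERIV_imp_deriv)
qed

lemma pdj7: "pdj 7 (KS_lag f g h) z = - z 8 * g (z 2)"
proof -
  have "((\<lambda>s. KS_lag f g h (z(7 := s))) has_real_derivative - z 8 * g (z 2)) (at (z 7))"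
    unfolding KS_lag_def KS_def
    by (auto intro!: derivative_eq_intros)
  then show ?thesis unfolding pdj_def by (rule DERIV_imp_deriv)
qed

lemma euler_KS:
  "euler_u (KS_lag f g h) u \<nu> p =
     \<nu> p * (- deriv f (u p) * pd False u p - deriv g (u p) * pd False (pd False u) p + deriv h (u p) * (pd False u p)\<^sup>2)
     - pd True \<nu> p
     - pd False (\<lambda>q. \<nu> q * (- f (u q) + 2 * h (u q) * pd False u q)) p
     + pd False (pd False (\<lambda>q. - \<nu> q * g (u q))) p"
proof -
  have e3: "(\<lambda>q. pdj 3 (KS_lag f g h) (jet2 u \<nu> q)) = \<nu>" by (simp add: pdj3 jet2_def)
  have e4: "(\<lambda>q. pdj 4 (KS_lag f g h) (jet2 u \<nu> q)) = (\<lambda>q. \<nu> q * (- f (u q) + 2 * h (u q) * pd False u q))"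
    by (simp add: pdj4 jet2_def)
  have e5: "(\<lambda>q. pdj 5 (KS_lag f g h) (jet2 u \<nu> q)) = (\<lambda>q. 0)" by (simp add: pdj5)
  have e6: "(\<lambda>q. pdj 6 (KS_lag f g h) (jet2 u \<nu> q)) = (\<lambda>q. 0)" by (simp add: pdj6)
  have e7: "(\<lambda>q. pdj 7 (KS_lag f g h) (jet2 u \<nu> q)) = (\<lambda>q. - \<nu> q * g (u q))" by (simp add: pdj7 jet2_def)
  show ?thesis unfolding euler_u_def e3 e4 e5 e6 e7 pd_const
    by (simp add: pdj2 jet2_def)
qed

end

lemma KS_jet2: "KS f g h (jet2 u \<nu> p) = pd True u p - f (u p) * pd False u p - g (u p) * pd False (pd False u) p + h (u p) * (pd False u p)\<^sup>2"
  by (simp add: KS_def jet2_def)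

lemma suff:
  fixes f g h P :: "real \<Rightarrow> real" and \<psi> \<psi>t \<psi>x \<psi>xx :: "real \<Rightarrow> real \<Rightarrow> real"
    and u :: "real \<times> real \<Rightarrow> real"
  assumes sf: "smooth_fun f" and sg: "smooth_fun g" and sh: "smooth_fun h"
    and gnz: "\<forall>w. g w \<noteq> 0"
    and dP: "\<forall>w. (P has_real_derivative ((deriv g w + h w) / g w)) (at w)"
    and dpt: "\<forall>t x. ((\<lambda>s. \<psi> s x) has_real_derivative \<psi>t t x) (at t)"
    and dpx: "\<forall>t x. ((\<lambda>s. \<psi> t s) has_real_derivative \<psi>x t x) (at x)"
    and dpxx: "\<forall>t x. ((\<lambda>s. \<psi>x t s) has_real_derivative \<psi>xx t x) (at x)"
    and pde: "\<forall>w t x. \<psi>t t x = f w * \<psi>x t x - g w * \<psi>xx t x"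
    and su: "smooth_fun u"
  shows "euler_u (KS_lag f g h) u (\<lambda>q. \<psi> (fst q) (snd q) * exp (- P (u q))) p =
    (\<psi> (fst p) (snd p) * ((deriv g (u p) + h (u p)) / g (u p)) * exp (- P (u p))) *
      KS f g h (jet2 u (\<lambda>q. \<psi> (fst q) (snd q) * exp (- P (u q))) p)"
proof -
  obtain t0 x0 where p: "p = (t0, x0)" by (cases p)
  have df: "\<And>x. f differentiable (at x)" and dg: "\<And>x. g differentiable (at x)"
    and dh: "\<And>x. h differentiable (at x)" using sf sg sh smooth_diff by blast+
  have Df: "\<And>x. (f has_real_derivative deriv f x) (at x)" using sf smooth_real_deriv by blast
  have Dg: "\<And>x. (g has_real_derivative deriv g x) (at x)" using sg smooth_real_deriv by blast
  have Dh: "\<And>x. (h has_real_derivative deriv h x) (at x)" using sh smooth_real_deriv by blast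
  have Dg2: "\<And>x. (deriv g has_real_derivative deriv (deriv g) x) (at x)"
    using sg smooth_real_deriv by metis
  define \<nu> where "\<nu> = (\<lambda>q. \<psi> (fst q) (snd q) * exp (- P (u q)))"
  define k where "k w = (deriv g w + h w) / g w" for w
  define kd where "kd w = (deriv (deriv g) w + deriv h w - deriv g w * k w) / g w" for w
  have Dk: "\<And>w. (k has_real_derivative kd w) (at w)"
  proof -
    fix w
    have "((\<lambda>w. (deriv g w + h w) / g w) has_real_derivative
       ((deriv (deriv g) w + deriv h w) * g w - (deriv g w + h w) * deriv g w) / (g w * g w)) (at w)"
      using gnz by (auto intro!: derivative_eq_intros Dg2 Dh Dg)
    moreover have "((deriv (deriv g) w + deriv h w) * g w - (deriv g w + h w) * deriv g w) / (g w * g w) = kd w"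
      using gnz unfolding kd_def k_def by (simp add: field_simps)
    ultimately show "(k has_real_derivative kd w) (at w)" unfolding k_def by simp
  qed
  define E where "E w = exp (- P w)" for w
  have DE: "\<And>w. (E has_real_derivative - k w * E w) (at w)"
  proof -
    fix w
    show "(E has_real_derivative - k w * E w) (at w)"
      unfolding E_def using dP unfolding k_def
      by (auto intro!: derivative_eq_intros)
  qed
  have kg: "\<And>w. g w * k w = deriv g w + h w" using gnz unfolding k_def by simp
  have kdg: "\<And>w. g w * kd w = deriv (deriv g) w + deriv h w - deriv g w * k w" using gnz unfolding kd_def by simp
  define U where "U s = u (t0, s)" for s
  define U1 where "U1 s = pd False u (t0, s)" for s
  define U2 where "U2 s = pd False (pd False u) (t0, s)" for s
  define Ut where "Ut = pd True u (t0, x0)"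
  have dU: "\<And>s. (U has_real_derivative U1 s) (at s)"
    unfolding U_def U1_def using smooth_line_x[OF su] by blast
  have dU1: "\<And>s. (U1 has_real_derivative U2 s) (at s)"
    unfolding U2_def U1_def using smooth_line_x[OF smooth_pd[OF su]] by blast
  have dUt: "((\<lambda>s. u (s, x0)) has_real_derivative Ut) (at t0)"
    unfolding Ut_def using smooth_line_t[OF su] by blast
  define n where "n s = \<psi> t0 s * E (U s)" for s
  define n1 where "n1 s = \<psi>x t0 s * E (U s) + \<psi> t0 s * (- k (U s) * E (U s) * U1 s)" for s
  have dEU: "\<And>s. ((\<lambda>s. E (U s)) has_real_derivative (- k (U s) * E (U s)) * U1 s) (at s)"
    by (rule DERIV_chain2[OF DE dU])
  have dkU: "\<And>s. ((\<lambda>s. k (U s)) has_real_derivative kd (U s) * U1 s) (at s)"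
    by (rule DERIV_chain2[OF Dk dU])
  have dfU: "\<And>s. ((\<lambda>s. f (U s)) has_real_derivative deriv f (U s) * U1 s) (at s)"
    by (rule DERIV_chain2[OF Df dU])
  have dgU: "\<And>s. ((\<lambda>s. g (U s)) has_real_derivative deriv g (U s) * U1 s) (at s)"
    by (rule DERIV_chain2[OF Dg dU])
  have dhU: "\<And>s. ((\<lambda>s. h (U s)) has_real_derivative deriv h (U s) * U1 s) (at s)"
    by (rule DERIV_chain2[OF Dh dU])
  have dg2U: "\<And>s. ((\<lambda>s. deriv g (U s)) has_real_derivative deriv (deriv g) (U s) * U1 s) (at s)"
    by (rule DERIV_chain2[OF Dg2 dU])
  have dpx0: "\<And>s. ((\<lambda>s. \<psi> t0 s) has_real_derivative \<psi>x t0 s) (at s)" using dpx by blast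
  have dpxx0: "\<And>s. ((\<lambda>s. \<psi>x t0 s) has_real_derivative \<psi>xx t0 s) (at s)" using dpxx by blast
  have dn: "\<And>s. (n has_real_derivative n1 s) (at s)"
  proof -
    fix s
    have "((\<lambda>s. \<psi> t0 s * E (U s)) has_real_derivative \<psi>x t0 s * E (U s) + \<psi> t0 s * ((- k (U s) * E (U s)) * U1 s)) (at s)"
      by (rule DERIV_cong, rule DERIV_mult[OF dpx0 dEU], simp add: algebra_simps)
    then show "(n has_real_derivative n1 s) (at s)" unfolding n_def[abs_def] n1_def by (simp add: algebra_simps)
  qed
  define n2 where "n2 = \<psi>xx t0 x0 * E (U x0) + \<psi>x t0 x0 * ((- k (U x0) * E (U x0)) * U1 x0)
     + (\<psi>x t0 x0 * (- k (U x0) * E (U x0) * U1 x0)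
     + \<psi> t0 x0 * (- (kd (U x0) * U1 x0) * E (U x0) * U1 x0 - k (U x0) * ((- k (U x0) * E (U x0)) * U1 x0) * U1 x0 - k (U x0) * E (U x0) * U2 x0))"
  have dn1: "(n1 has_real_derivative n2) (at x0)"
  proof -
    have "((\<lambda>s. \<psi>x t0 s * E (U s) + \<psi> t0 s * (- k (U s) * E (U s) * U1 s)) has_real_derivative n2) (at x0)"
      unfolding n2_def
      by (rule DERIV_cong, (rule DERIV_add DERIV_mult DERIV_minus dpxx0 dEU dpx0 dkU dU1)+, simp add: algebra_simps)
    then show ?thesis unfolding n1_def[abs_def] .
  qed
  have dpt0: "((\<lambda>s. \<psi> s x0) has_real_derivative \<psi>t t0 x0) (at t0)" using dpt by blast
  have T2: "pd True \<nu> p = \<psi>t t0 x0 * E (U x0) + \<psi> t0 x0 * ((- k (U x0) * E (U x0)) * Ut)"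
  proof -
    have "((\<lambda>s. \<psi> s x0 * E (u (s, x0))) has_real_derivative \<psi>t t0 x0 * E (U x0) + \<psi> t0 x0 * ((- k (U x0) * E (U x0)) * Ut)) (at t0)"
      unfolding U_def
      by (rule DERIV_cong, rule DERIV_mult[OF dpt0 DERIV_chain2[OF DE dUt]], simp add: algebra_simps)
    moreover have "(\<lambda>s. \<nu> (s, x0)) = (\<lambda>s. \<psi> s x0 * E (u (s, x0)))" unfolding \<nu>_def E_def by simp
    ultimately show ?thesis unfolding pd_def p by (simp add: DERIV_imp_deriv)
  qed
  define T3v where "T3v = n1 x0 * (- f (U x0) + 2 * h (U x0) * U1 x0) + n x0 * (- (deriv f (U x0) * U1 x0) + 2 * ((deriv h (U x0) * U1 x0) * U1 x0 + h (U x0) * U2 x0))"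
  have T3: "pd False (\<lambda>q. \<nu> q * (- f (u q) + 2 * h (u q) * pd False u q)) p = T3v"
  proof -
    have "((\<lambda>s. n s * (- f (U s) + 2 * h (U s) * U1 s)) has_real_derivative T3v) (at x0)"
      unfolding T3v_def
      by (rule DERIV_cong, (rule DERIV_add DERIV_mult DERIV_minus DERIV_const dn dfU dhU dU1)+, simp add: algebra_simps)
    moreover have "(\<lambda>s. \<nu> (t0, s) * (- f (u (t0, s)) + 2 * h (u (t0, s)) * pd False u (t0, s))) = (\<lambda>s. n s * (- f (U s) + 2 * h (U s) * U1 s))"
      unfolding \<nu>_def n_def E_def U_def U1_def by simp
    ultimately show ?thesis unfolding pd_def p by (simp add: DERIV_imp_deriv)
  qed
  define V1 where "V1 s = - (n1 s * g (U s) + n s * (deriv g (U s) * U1 s))" for s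
  have T6i: "(\<lambda>s. pd False (\<lambda>q. - \<nu> q * g (u q)) (t0, s)) = V1"
  proof (rule ext)
    fix s
      have "((\<lambda>s. - n s * g (U s)) has_real_derivative V1 s) (at s)"
        unfolding V1_def
        by (rule DERIV_cong, (rule DERIV_mult DERIV_minus dn dgU)+, simp add: algebra_simps)
      moreover have "(\<lambda>s. - \<nu> (t0, s) * g (u (t0, s))) = (\<lambda>s. - n s * g (U s))"
        unfolding \<nu>_def n_def E_def U_def by simp
      ultimately show "pd False (\<lambda>q. - \<nu> q * g (u q)) (t0, s) = V1 s" unfolding pd_def by (simp add: DERIV_imp_deriv)
  qed
  define T6v where "T6v = - (n2 * g (U x0) + n1 x0 * (deriv g (U x0) * U1 x0) + (n1 x0 * (deriv g (U x0) * U1 x0) + n x0 * ((deriv (deriv g) (U x0) * U1 x0) * U1 x0 + deriv g (U x0) * U2 x0)))"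
  have T6: "pd False (pd False (\<lambda>q. - \<nu> q * g (u q))) p = T6v"
  proof -
    have "(V1 has_real_derivative T6v) (at x0)"
      unfolding T6v_def V1_def[abs_def]
      by (rule DERIV_cong, (rule DERIV_add DERIV_mult DERIV_minus dn dn1 dgU dg2U dU1)+, simp add: algebra_simps)
    moreover have "pd False (pd False (\<lambda>q. - \<nu> q * g (u q))) p = deriv V1 x0"
      unfolding p using T6i by (simp add: pd_def[of False "pd False _"])
    ultimately show ?thesis by (simp add: DERIV_imp_deriv)
  qed
  have EU: "euler_u (KS_lag f g h) u \<nu> p =
     \<nu> p * (- deriv f (U x0) * U1 x0 - deriv g (U x0) * U2 x0 + deriv h (U x0) * (U1 x0)\<^sup>2) - pd True \<nu> p - T3v + T6v"
    using euler_KS[OF df dg dh, of u \<nu> p] T3 T6 unfolding U_def U1_def U2_def p by simp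
  have KSv: "KS f g h (jet2 u \<nu> p) = Ut - f (U x0) * U1 x0 - g (U x0) * U2 x0 + h (U x0) * (U1 x0)\<^sup>2"
    unfolding KS_jet2 U_def U1_def U2_def Ut_def p by simp
  have nup: "\<nu> p = \<psi> t0 x0 * E (U x0)" unfolding \<nu>_def p E_def U_def by simp
  have hw: "h (U x0) = g (U x0) * k (U x0) - deriv g (U x0)" using kg[of "U x0"] by simp
  have hdw: "deriv h (U x0) = g (U x0) * kd (U x0) - deriv (deriv g) (U x0) + deriv g (U x0) * k (U x0)"
    using kdg[of "U x0"] by simp
  have pt: "\<psi>t t0 x0 = f (U x0) * \<psi>x t0 x0 - g (U x0) * \<psi>xx t0 x0" using pde by blast
  have "euler_u (KS_lag f g h) u \<nu> p = (\<psi> t0 x0 * k (U x0) * E (U x0)) * KS f g h (jet2 u \<nu> p)"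
    unfolding EU KSv T2 nup T3v_def T6v_def n2_def n_def n1_def hw hdw pt
    by algebra
  then show ?thesis unfolding \<nu>_def p k_def E_def U_def by simp
qed

lemma P_smooth:
  fixes g h P :: "real \<Rightarrow> real"
  assumes sg: "smooth_fun g" and sh: "smooth_fun h" and gnz: "\<forall>w. g w \<noteq> 0"
    and dP: "\<forall>w. (P has_real_derivative ((deriv g w + h w) / g w)) (at w)"
  shows "smooth_fun P"
proof -
  have kalg: "(\<lambda>w. (deriv g w + h w) * inverse (g w)) \<in> alg"
    by (intro alg.mult alg.add alg.base alg.inv smooth_real_deriv(1)[OF sg] sh sg gnz)
  have dif: "\<And>p. P differentiable (at p)" using dP real_differentiable_def by blast
  have "\<And>q d. frechet_derivative P (at q) d = d * ((deriv g q + h q) * inverse (g q))"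
  proof -
    fix q d
    have "deriv P q = (deriv g q + h q) / g q" using dP DERIV_imp_deriv by blast
    then show "frechet_derivative P (at q) d = d * ((deriv g q + h q) * inverse (g q))"
      using fd_real[OF dif, of q d] by (simp add: divide_inverse mult.commute)
  qed
  then have "\<And>d. (\<lambda>q. frechet_derivative P (at q) d) \<in> alg"
    using alg.mult[OF alg.const kalg] by simp
  then show ?thesis using smooth_fun_iff dif alg_smooth by blast
qed

lemma bl3:
  "bounded_linear (\<lambda>q::real \<times> real \<times> real. fst q)"
  "bounded_linear (\<lambda>q::real \<times> real \<times> real. fst (snd q))"
  "bounded_linear (\<lambda>q::real \<times> real \<times> real. snd (snd q))"
  by (auto intro: bounded_linear_fst bounded_linear_fst_comp bounded_linear_snd_comp bounded_linear_snd)

lemma smooth_phi: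
  fixes P :: "real \<Rightarrow> real" and \<psi> :: "real \<Rightarrow> real \<Rightarrow> real"
  assumes sP: "smooth_fun P" and a: "(\<lambda>q::real \<times> real \<times> real. \<psi> (fst q) (fst (snd q))) \<in> alg"
  shows "smooth_fun (\<lambda>(t, x, w). \<psi> t x * exp (- P w))"
proof -
  have "(\<lambda>w. exp (-1 * P w)) \<in> alg"
    by (intro alg.comp[OF smooth_exp] alg.mult alg.const alg.base sP)
  then have sE: "smooth_fun (\<lambda>w. exp (- P w))" using alg_smooth by simp
  have "(\<lambda>q::real \<times> real \<times> real. \<psi> (fst q) (fst (snd q)) * exp (- P (snd (snd q)))) \<in> alg"
    by (intro alg.mult a alg.comp[OF sE] alg.lin bl3)
  moreover have "(\<lambda>(t, x, w). \<psi> t x * exp (- P w)) = (\<lambda>q::real \<times> real \<times> real. \<psi> (fst q) (fst (snd q)) * exp (- P (snd (snd q))))"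
    by (auto simp: split_def)
  ultimately show ?thesis using alg_smooth by simp
qed

lemma suff_subst:
  fixes f g h P :: "real \<Rightarrow> real" and \<psi> \<psi>t \<psi>x \<psi>xx :: "real \<Rightarrow> real \<Rightarrow> real"
  assumes sf: "smooth_fun f" and sg: "smooth_fun g" and sh: "smooth_fun h"
    and gnz: "\<forall>w. g w \<noteq> 0"
    and dP: "\<forall>w. (P has_real_derivative ((deriv g w + h w) / g w)) (at w)"
    and dpt: "\<forall>t x. ((\<lambda>s. \<psi> s x) has_real_derivative \<psi>t t x) (at t)"
    and dpx: "\<forall>t x. ((\<lambda>s. \<psi> t s) has_real_derivative \<psi>x t x) (at x)"
    and dpxx: "\<forall>t x. ((\<lambda>s. \<psi>x t s) has_real_derivative \<psi>xx t x) (at x)"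
    and pde: "\<forall>w t x. \<psi>t t x = f w * \<psi>x t x - g w * \<psi>xx t x"
    and a: "(\<lambda>q::real \<times> real \<times> real. \<psi> (fst q) (fst (snd q))) \<in> alg"
    and nz: "\<psi> t1 x1 \<noteq> 0"
  shows "KS_subst f g h (\<lambda>t x w. \<psi> t x * exp (- P w))"
  unfolding KS_subst_def
proof (intro conjI)
  show "smooth_fun (\<lambda>(t, x, w). \<psi> t x * exp (- P w))"
    by (rule smooth_phi[OF P_smooth[OF sg sh gnz dP] a])
  show "(\<lambda>t x w. \<psi> t x * exp (- P w)) \<noteq> (\<lambda>t x w. 0)"
  proof
    assume "(\<lambda>t x w. \<psi> t x * exp (- P w)) = (\<lambda>t x w. 0)"
    then have "\<psi> t1 x1 * exp (- P 0) = 0" by metis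
    then show False using nz by simp
  qed
  show "\<exists>\<Lambda>. \<forall>u. smooth_fun u \<longrightarrow> (\<forall>p. euler_u (KS_lag f g h) u (\<lambda>q. \<psi> (fst q) (snd q) * exp (- P (u q))) p =
      \<Lambda> (fst p) (snd p) (jet u p) * KS f g h (jet2 u (\<lambda>q. \<psi> (fst q) (snd q) * exp (- P (u q))) p))"
  proof (intro exI[of _ "\<lambda>t x j. \<psi> t x * ((deriv g (j []) + h (j [])) / g (j [])) * exp (- P (j []))"] allI impI)
    fix u :: "real \<times> real \<Rightarrow> real" and p assume su: "smooth_fun u"
    have "jet u p [] = u p" by (simp add: jet_def)
    then show "euler_u (KS_lag f g h) u (\<lambda>q. \<psi> (fst q) (snd q) * exp (- P (u q))) p =
      (\<lambda>t x j. \<psi> t x * ((deriv g (j []) + h (j [])) / g (j [])) * exp (- P (j []))) (fst p) (snd p) (jet u p) * KS f g h (jet2 u (\<lambda>q. \<psi> (fst q) (snd q) * exp (- P (u q))) p)"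
      using suff[OF sf sg sh gnz dP dpt dpx dpxx pde su, of p] by simp
  qed
qed

context
  fixes f g h P :: "real \<Rightarrow> real"
  assumes sf: "smooth_fun f" and sg: "smooth_fun g" and sh: "smooth_fun h"
    and gnz: "\<forall>w. g w \<noteq> 0"
    and dP: "\<forall>w. (P has_real_derivative ((deriv g w + h w) / g w)) (at w)"
begin

lemma if_iii:
  assumes "c5 \<noteq> 0"
  shows "KS_subst f g h (\<lambda>t x w. c5 * exp (- P w))"
proof -
  have "KS_subst f g h (\<lambda>t x w. (\<lambda>t x. c5) t x * exp (- P w))"
    by (rule suff_subst[OF sf sg sh gnz dP, where \<psi>t = "\<lambda>t x. 0" and \<psi>x = "\<lambda>t x. 0" and \<psi>xx = "\<lambda>t x. 0"])
       (auto intro: alg.const simp: assms)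
  then show ?thesis by simp
qed

lemma if_ii:
  assumes fb: "f = (\<lambda>w. b)" and nz: "(c3, c4) \<noteq> (0, 0)"
  shows "KS_subst f g h (\<lambda>t x w. (c3 * (x + b * t) + c4) * exp (- P w))"
proof -
  obtain t1 x1 where n: "c3 * (x1 + b * t1) + c4 \<noteq> 0"
  proof (cases "c4 = 0")
    case True then have "c3 \<noteq> 0" using nz by auto
    then show ?thesis using True that[of 1 0] by simp
  next
    case False then show ?thesis using that[of 0 0] by simp
  qed
  have a: "(\<lambda>q::real \<times> real \<times> real. c3 * (fst (snd q) + b * fst q) + c4) \<in> alg"
    by (intro alg.add alg.mult alg.const alg.lin bl3)
  have "KS_subst f g h (\<lambda>t x w. (\<lambda>t x. c3 * (x + b * t) + c4) t x * exp (- P w))"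
    by (rule suff_subst[OF sf sg sh gnz dP _ _ _ _ a n, where \<psi>t = "\<lambda>t x. c3 * b" and \<psi>x = "\<lambda>t x. c3" and \<psi>xx = "\<lambda>t x. 0"])
       (auto intro!: derivative_eq_intros simp: fb a n)
  then show ?thesis by simp
qed

lemma if_i:
  assumes fb: "f = (\<lambda>w. a * g w + b)" and a0: "a \<noteq> 0" and nz: "(c1, c2) \<noteq> (0, 0)"
  shows "KS_subst f g h (\<lambda>t x w. (c1 * exp (a * x + a * b * t) + c2) * exp (- P w))"
proof -
  obtain t1 x1 where n: "c1 * exp (a * x1 + a * b * t1) + c2 \<noteq> 0"
  proof (cases "c1 + c2 = 0")
    case True then have "c1 \<noteq> 0" using nz by auto
    moreover have "exp a \<noteq> 1" using a0 by simp
    ultimately have "c1 * (exp a - 1) \<noteq> 0" by simp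
    moreover have "c1 * exp (a * 1 + a * b * 0) + c2 = c1 * (exp a - 1)"
    proof -
      have "c2 = - c1" using True by linarith
      then show ?thesis by (simp add: right_diff_distrib)
    qed
    ultimately have "c1 * exp (a * 1 + a * b * 0) + c2 \<noteq> 0" by simp
    then show ?thesis using that by blast
  next
    case False then show ?thesis using that[of 0 0] by simp
  qed
  have al: "(\<lambda>q::real \<times> real \<times> real. c1 * exp (a * fst (snd q) + a * b * fst q) + c2) \<in> alg"
    by (intro alg.add alg.mult alg.const alg.lin bl3 alg.comp[OF smooth_exp])
  have "KS_subst f g h (\<lambda>t x w. (\<lambda>t x. c1 * exp (a * x + a * b * t) + c2) t x * exp (- P w))"
    by (rule suff_subst[OF sf sg sh gnz dP _ _ _ _ al n, where \<psi>t = "\<lambda>t x. c1 * exp (a * x + a * b * t) * (a * b)"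
          and \<psi>x = "\<lambda>t x. c1 * exp (a * x + a * b * t) * a" and \<psi>xx = "\<lambda>t x. c1 * exp (a * x + a * b * t) * a * a"])
       (auto intro!: derivative_eq_intros simp: fb al n algebra_simps)
  then show ?thesis by simp
qed

end

lemma P_exists:
  fixes g h :: "real \<Rightarrow> real"
  assumes sg: "smooth_fun g" and sh: "smooth_fun h" and gnz: "\<forall>w. g w \<noteq> 0"
  shows "\<exists>P. \<forall>w. (P has_real_derivative ((deriv g w + h w) / g w)) (at w)"
proof -
  define k where "k w = (deriv g w + h w) / g w" for w
  have "(\<lambda>w. (deriv g w + h w) * inverse (g w)) \<in> alg"
    by (intro alg.mult alg.add alg.base alg.inv smooth_real_deriv(1)[OF sg] sh sg gnz)
  moreover have "(\<lambda>w. (deriv g w + h w) * inverse (g w)) = k" unfolding k_def by (simp add: divide_inverse)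
  ultimately have dk: "\<And>w. k differentiable (at w)" using alg_diff by metis
  have ck: "continuous_on S k" for S
    by (intro continuous_at_imp_continuous_on ballI differentiable_imp_continuous_within dk)
  have "((\<lambda>u. LBINT y=ereal 0..u. k y) has_real_derivative k w) (at w)" for w
  proof -
    define a where "a = min 0 w - 1"
    define b where "b = max 0 w + 1"
    have "((\<lambda>u. LBINT y=ereal 0..u. k y) has_vector_derivative k w) (at w within {a..b})"
    proof (rule interval_integral_FTC2[of a 0 b k w])
      show "a \<le> 0" "0 \<le> b" "a \<le> w" "w \<le> b" unfolding a_def b_def by linarith+
      show "continuous_on {a..b} k" by (rule ck)
    qed
    moreover have "min 0 w \<le> w" "w \<le> max 0 w" by (rule min.cobounded2, rule max.cobounded2)
    then have "a < w" "w < b" unfolding a_def b_def by linarith+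
    then have "w \<in> interior {a..b}" unfolding interior_atLeastAtMost_real by simp
    then have "at w within {a..b} = at w" by (rule at_within_interior)
    ultimately have "((\<lambda>u. LBINT y=ereal 0..u. k y) has_vector_derivative k w) (at w)" by simp
    then show ?thesis by (simp only: has_real_derivative_iff_has_vector_derivative)
  qed
  then show ?thesis unfolding k_def by blast
qed

lemma chain3:
  fixes \<Phi> :: "real \<times> real \<times> real \<Rightarrow> real"
  assumes d: "\<Phi> differentiable (at (T s, X s, W s))"
    and dT: "(T has_real_derivative T') (at s)" and dX: "(X has_real_derivative X') (at s)"
    and dW: "(W has_real_derivative W') (at s)"
  shows "((\<lambda>s. \<Phi> (T s, X s, W s)) has_real_derivative
     T' * frechet_derivative \<Phi> (at (T s, X s, W s)) (1, 0, 0)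
     + X' * frechet_derivative \<Phi> (at (T s, X s, W s)) (0, 1, 0)
     + W' * frechet_derivative \<Phi> (at (T s, X s, W s)) (0, 0, 1)) (at s)"
proof -
  have c: "((\<lambda>s. (T s, X s, W s)) has_vector_derivative (T', X', W')) (at s)"
    using dT dX dW
    by (intro has_vector_derivative_Pair) (simp_all add: has_real_derivative_iff_has_vector_derivative)
  have bl: "linear (frechet_derivative \<Phi> (at (T s, X s, W s)))"
    using has_derivative_bounded_linear[OF fd_has[OF d]] bounded_linear.linear by blast
  have e: "(T', X', W') = T' *\<^sub>R (1, 0, 0) + X' *\<^sub>R (0, 1, 0) + W' *\<^sub>R (0::real, 0::real, 1::real)"
    by simp
  have "frechet_derivative \<Phi> (at (T s, X s, W s)) (T', X', W') =
     T' * frechet_derivative \<Phi> (at (T s, X s, W s)) (1, 0, 0)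
     + X' * frechet_derivative \<Phi> (at (T s, X s, W s)) (0, 1, 0)
     + W' * frechet_derivative \<Phi> (at (T s, X s, W s)) (0, 0, 1)"
    unfolding e linear_add[OF bl] linear_scale[OF bl] by simp
  then show ?thesis using path_deriv[OF d c] by simp
qed

lemma only_if_core:
  fixes f g h :: "real \<Rightarrow> real" and \<phi> :: "real \<Rightarrow> real \<Rightarrow> real \<Rightarrow> real"
  assumes sf: "smooth_fun f" and sg: "smooth_fun g" and sh: "smooth_fun h"
    and sub: "KS_subst f g h \<phi>"
  defines "\<Phi> \<equiv> (\<lambda>(t, x, w). \<phi> t x w)"
  shows "- frechet_derivative \<Phi> (at (t0, x0, w)) (1, 0, 0)
     + f w * frechet_derivative \<Phi> (at (t0, x0, w)) (0, 1, 0)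
     - g w * frechet_derivative (\<lambda>q. frechet_derivative \<Phi> (at q) (0, 1, 0)) (at (t0, x0, w)) (0, 1, 0)
     + 2 * c * (- 2 * deriv g w * \<phi> t0 x0 w - 2 * g w * frechet_derivative \<Phi> (at (t0, x0, w)) (0, 0, 1)
         - 2 * h w * \<phi> t0 x0 w) = 0"
proof -
  have sPhi: "smooth_fun \<Phi>" using sub unfolding KS_subst_def \<Phi>_def by blast
  obtain \<Lambda> where L: "\<And>u p. smooth_fun u \<Longrightarrow> euler_u (KS_lag f g h) u (\<lambda>q. \<phi> (fst q) (snd q) (u q)) p
            = \<Lambda> (fst p) (snd p) (jet u p) * KS f g h (jet2 u (\<lambda>q. \<phi> (fst q) (snd q) (u q)) p)"
    using sub unfolding KS_subst_def by blast
  have df: "\<And>x. f differentiable (at x)" and dg: "\<And>x. g differentiable (at x)"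
    and dh: "\<And>x. h differentiable (at x)" using sf sg sh smooth_diff by blast+
  have Df: "\<And>x. (f has_real_derivative deriv f x) (at x)" using sf smooth_real_deriv by blast
  have Dg: "\<And>x. (g has_real_derivative deriv g x) (at x)" using sg smooth_real_deriv by blast
  have Dh: "\<And>x. (h has_real_derivative deriv h x) (at x)" using sh smooth_real_deriv by blast
  define \<alpha> where "\<alpha> = 2 * c * g w"
  define u where "u = (\<lambda>q::real \<times> real. w + \<alpha> * (fst q - t0) + c * ((snd q - x0) * (snd q - x0)))"
  have "(\<lambda>q::real \<times> real. w + \<alpha> * (fst q + - t0) + c * ((snd q + - x0) * (snd q + - x0))) \<in> alg"
    by (intro alg.add alg.mult alg.const alg.lin bounded_linear_fst bounded_linear_snd)
  then have su: "smooth_fun u" unfolding u_def using alg_smooth by simp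
  have uT: "pd True u = (\<lambda>q. \<alpha>)"
  proof (rule ext)
    fix q :: "real \<times> real"
    have "((\<lambda>s. u (s, snd q)) has_real_derivative \<alpha>) (at (fst q))"
      unfolding u_def by (auto intro!: derivative_eq_intros)
    then show "pd True u q = \<alpha>" unfolding pd_def by (simp add: DERIV_imp_deriv)
  qed
  have uF: "pd False u = (\<lambda>q. 2 * c * (snd q - x0))"
  proof (rule ext)
    fix q :: "real \<times> real"
    have "((\<lambda>s. u (fst q, s)) has_real_derivative 2 * c * (snd q - x0)) (at (snd q))"
      unfolding u_def by (auto intro!: derivative_eq_intros)
    then show "pd False u q = 2 * c * (snd q - x0)" unfolding pd_def by (simp add: DERIV_imp_deriv)
  qed
  have uFF: "pd False (pd False u) = (\<lambda>q. 2 * c)"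
  proof (rule ext)
    fix q :: "real \<times> real"
    have "((\<lambda>s. 2 * c * (s - x0)) has_real_derivative 2 * c) (at (snd q))"
      by (auto intro!: derivative_eq_intros)
    then show "pd False (pd False u) q = 2 * c" by (subst uF) (simp add: pd_def DERIV_imp_deriv)
  qed
  define p where "p = (t0, x0)"
  define \<nu> where "\<nu> = (\<lambda>q. \<phi> (fst q) (snd q) (u q))"
  have up: "u p = w" unfolding u_def p_def by simp
  have uFFp: "pd False (pd False u) p = 2 * c" using uFF by simp
  have uFp: "pd False u p = 0" using uF by (simp add: p_def)
  have uTp: "pd True u p = \<alpha>" using uT by simp
  have KS0: "KS f g h (jet2 u \<nu> p) = 0"
    unfolding KS_jet2 uFFp uFp uTp up by (simp add: \<alpha>_def)
  have E0: "euler_u (KS_lag f g h) u \<nu> p = 0" using L[OF su, of p] KS0 unfolding \<nu>_def by simp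
  define m where "m r = w + c * ((r - x0) * (r - x0))" for r
  have um: "\<And>r. u (t0, r) = m r" unfolding u_def m_def by simp
  define m1 where "m1 r = 2 * c * (r - x0)" for r
  have dm: "\<And>r. (m has_real_derivative m1 r) (at r)"
    unfolding m_def m1_def by (auto intro!: derivative_eq_intros)
  have dm1: "\<And>r. (m1 has_real_derivative 2 * c) (at r)"
    unfolding m1_def by (auto intro!: derivative_eq_intros)
  define Dt where "Dt q = frechet_derivative \<Phi> (at q) (1, 0, 0)" for q
  define Dx where "Dx q = frechet_derivative \<Phi> (at q) (0, 1, 0)" for q
  define Du where "Du q = frechet_derivative \<Phi> (at q) (0, 0, 1)" for q
  have sDx: "smooth_fun Dx" unfolding Dx_def[abs_def] using smooth_D[OF sPhi] .
  have sDu: "smooth_fun Du" unfolding Du_def[abs_def] using smooth_D[OF sPhi] .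
  define Dxx where "Dxx q = frechet_derivative Dx (at q) (0, 1, 0)" for q
  define Dxu where "Dxu q = frechet_derivative Dx (at q) (0, 0, 1)" for q
  define Dut where "Dut q = frechet_derivative Du (at q) (1, 0, 0)" for q
  define Dux where "Dux q = frechet_derivative Du (at q) (0, 1, 0)" for q
  define Duu where "Duu q = frechet_derivative Du (at q) (0, 0, 1)" for q
  have dconst: "\<And>r. ((\<lambda>r. t0) has_real_derivative 0) (at r)" by simp
  have did: "\<And>r. ((\<lambda>r. r) has_real_derivative 1) (at r)" by simp
  define N where "N r = \<phi> t0 r (m r)" for r
  define N1 where "N1 r = Dx (t0, r, m r) + m1 r * Du (t0, r, m r)" for r
  have dN: "\<And>r. (N has_real_derivative N1 r) (at r)"
  proof -
    fix r
    have "((\<lambda>r. \<Phi> (t0, r, m r)) has_real_derivative N1 r) (at r)"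
      using chain3[OF smooth_diff[OF sPhi] dconst did dm] unfolding N1_def Dx_def Du_def by simp
    then show "(N has_real_derivative N1 r) (at r)" unfolding N_def[abs_def] \<Phi>_def by simp
  qed
  have mx0: "m x0 = w" unfolding m_def by simp
  have m1x0: "m1 x0 = 0" unfolding m1_def by simp
  have dN1: "(N1 has_real_derivative Dxx (t0, x0, w) + 2 * c * Du (t0, x0, w)) (at x0)"
  proof -
    have a: "((\<lambda>r. Dx (t0, r, m r)) has_real_derivative 0 * frechet_derivative Dx (at (t0, x0, m x0)) (1,0,0)
       + 1 * frechet_derivative Dx (at (t0, x0, m x0)) (0,1,0) + m1 x0 * frechet_derivative Dx (at (t0, x0, m x0)) (0,0,1)) (at x0)"
      by (rule chain3[OF smooth_diff[OF sDx] dconst did dm])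
    have b: "((\<lambda>r. Du (t0, r, m r)) has_real_derivative 0 * frechet_derivative Du (at (t0, x0, m x0)) (1,0,0)
       + 1 * frechet_derivative Du (at (t0, x0, m x0)) (0,1,0) + m1 x0 * frechet_derivative Du (at (t0, x0, m x0)) (0,0,1)) (at x0)"
      by (rule chain3[OF smooth_diff[OF sDu] dconst did dm])
    have "((\<lambda>r. Dx (t0, r, m r) + m1 r * Du (t0, r, m r)) has_real_derivative Dxx (t0, x0, w) + 2 * c * Du (t0, x0, w)) (at x0)"
      by (rule DERIV_cong[OF DERIV_add[OF a DERIV_mult'[OF dm1 b]]]) (simp add: mx0 m1x0 Dxx_def)
    then show ?thesis unfolding N1_def[abs_def] .
  qed
  have Dg2: "\<And>x. (deriv g has_real_derivative deriv (deriv g) x) (at x)"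
    using sg smooth_real_deriv by metis
  have dfm: "\<And>s. ((\<lambda>s. f (m s)) has_real_derivative deriv f (m s) * m1 s) (at s)"
    by (rule DERIV_chain2[OF Df dm])
  have dgm: "\<And>s. ((\<lambda>s. g (m s)) has_real_derivative deriv g (m s) * m1 s) (at s)"
    by (rule DERIV_chain2[OF Dg dm])
  have dhm: "\<And>s. ((\<lambda>s. h (m s)) has_real_derivative deriv h (m s) * m1 s) (at s)"
    by (rule DERIV_chain2[OF Dh dm])
  have dg2m: "\<And>s. ((\<lambda>s. deriv g (m s)) has_real_derivative deriv (deriv g) (m s) * m1 s) (at s)"
    by (rule DERIV_chain2[OF Dg2 dm])
  have T1: "\<nu> p * (- deriv f (u p) * pd False u p - deriv g (u p) * pd False (pd False u) p + deriv h (u p) * (pd False u p)\<^sup>2)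
     = - 2 * c * deriv g w * \<phi> t0 x0 w"
    unfolding uFFp uFp up by (simp add: \<nu>_def p_def up[unfolded p_def])
  have T2: "pd True \<nu> p = Dt (t0, x0, w) + \<alpha> * Du (t0, x0, w)"
  proof -
    have dW: "((\<lambda>s. w + \<alpha> * (s - t0)) has_real_derivative \<alpha>) (at t0)" by (auto intro!: derivative_eq_intros)
    have dX: "((\<lambda>s. x0) has_real_derivative 0) (at t0)" by simp
    have "((\<lambda>s. \<Phi> (s, x0, w + \<alpha> * (s - t0))) has_real_derivative 1 * Dt (t0, x0, w + \<alpha> * (t0 - t0)) + 0 * Dx (t0, x0, w + \<alpha> * (t0 - t0)) + \<alpha> * Du (t0, x0, w + \<alpha> * (t0 - t0))) (at t0)"
      unfolding Dt_def Dx_def Du_def by (rule chain3[OF smooth_diff[OF sPhi] did dX dW])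
    moreover have "(\<lambda>s. \<nu> (s, x0)) = (\<lambda>s. \<Phi> (s, x0, w + \<alpha> * (s - t0)))"
      unfolding \<nu>_def \<Phi>_def u_def by simp
    ultimately show ?thesis unfolding pd_def p_def by (simp add: DERIV_imp_deriv)
  qed
  define T3v where "T3v = N1 x0 * (- f (m x0) + 2 * h (m x0) * m1 x0) + N x0 * (- (deriv f (m x0) * m1 x0) + 2 * ((deriv h (m x0) * m1 x0) * m1 x0 + h (m x0) * (2 * c)))"
  have T3: "pd False (\<lambda>q. \<nu> q * (- f (u q) + 2 * h (u q) * pd False u q)) p = T3v"
  proof -
    have "((\<lambda>s. N s * (- f (m s) + 2 * h (m s) * m1 s)) has_real_derivative T3v) (at x0)"
      unfolding T3v_def
      by (rule DERIV_cong, (rule DERIV_add DERIV_mult DERIV_minus DERIV_const dN dfm dhm dm1)+, simp add: algebra_simps)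
    moreover have "(\<lambda>s. \<nu> (t0, s) * (- f (u (t0, s)) + 2 * h (u (t0, s)) * pd False u (t0, s))) = (\<lambda>s. N s * (- f (m s) + 2 * h (m s) * m1 s))"
      unfolding \<nu>_def N_def um uF m1_def by simp
    ultimately show ?thesis unfolding pd_def p_def by (simp add: DERIV_imp_deriv)
  qed
  define V1 where "V1 s = - (N1 s * g (m s) + N s * (deriv g (m s) * m1 s))" for s
  have T6i: "(\<lambda>s. pd False (\<lambda>q. - \<nu> q * g (u q)) (t0, s)) = V1"
  proof (rule ext)
    fix s
    have "((\<lambda>s. - N s * g (m s)) has_real_derivative V1 s) (at s)"
      unfolding V1_def
      by (rule DERIV_cong, (rule DERIV_mult DERIV_minus dN dgm)+, simp add: algebra_simps)
    moreover have "(\<lambda>s. - \<nu> (t0, s) * g (u (t0, s))) = (\<lambda>s. - N s * g (m s))"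
      unfolding \<nu>_def N_def um by simp
    ultimately show "pd False (\<lambda>q. - \<nu> q * g (u q)) (t0, s) = V1 s" unfolding pd_def by (simp add: DERIV_imp_deriv)
  qed
  define T6v where "T6v = - ((Dxx (t0, x0, w) + 2 * c * Du (t0, x0, w)) * g (m x0) + N1 x0 * (deriv g (m x0) * m1 x0) + (N1 x0 * (deriv g (m x0) * m1 x0) + N x0 * ((deriv (deriv g) (m x0) * m1 x0) * m1 x0 + deriv g (m x0) * (2 * c))))"
  have T6: "pd False (pd False (\<lambda>q. - \<nu> q * g (u q))) p = T6v"
  proof -
    have "(V1 has_real_derivative T6v) (at x0)"
      unfolding T6v_def V1_def[abs_def]
      by (rule DERIV_cong, (rule DERIV_add DERIV_mult DERIV_minus dN dN1 dgm dg2m dm1)+, simp add: algebra_simps)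
    moreover have "pd False (pd False (\<lambda>q. - \<nu> q * g (u q))) p = deriv V1 x0"
      unfolding p_def using T6i by (simp add: pd_def[of False "pd False _"])
    ultimately show ?thesis by (simp add: DERIV_imp_deriv)
  qed
  have "0 = - 2 * c * deriv g w * \<phi> t0 x0 w - (Dt (t0, x0, w) + \<alpha> * Du (t0, x0, w)) - T3v + T6v"
    using E0 euler_KS[OF df dg dh, of u \<nu> p] T1 T2 T3 T6 by simp
  moreover have "N x0 = \<phi> t0 x0 w" unfolding N_def mx0 by simp
  moreover have "N1 x0 = Dx (t0, x0, w)" unfolding N1_def mx0 m1x0 by simp
  ultimately have "0 = - 2 * c * deriv g w * \<phi> t0 x0 w - (Dt (t0, x0, w) + \<alpha> * Du (t0, x0, w))
     - (Dx (t0, x0, w) * (- f w) + \<phi> t0 x0 w * (2 * (h w * (2 * c))))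
     - ((Dxx (t0, x0, w) + 2 * c * Du (t0, x0, w)) * g w + \<phi> t0 x0 w * (deriv g w * (2 * c)))"
    unfolding T3v_def T6v_def mx0 m1x0 by simp
  then show ?thesis unfolding Dt_def Dx_def Du_def Dxx_def \<alpha>_def by (simp add: algebra_simps)
qed

lemma nec:
  fixes f g h P :: "real \<Rightarrow> real" and \<phi> :: "real \<Rightarrow> real \<Rightarrow> real \<Rightarrow> real"
  assumes sf: "smooth_fun f" and sg: "smooth_fun g" and sh: "smooth_fun h"
    and gnz: "\<forall>w. g w \<noteq> 0"
    and dP: "\<forall>w. (P has_real_derivative ((deriv g w + h w) / g w)) (at w)"
    and sub: "KS_subst f g h \<phi>"
  shows "\<exists>\<Psi>t \<Psi>x \<Psi>xx. (\<forall>t x w. \<phi> t x w = \<phi> t x 0 * exp (P 0) * exp (- P w))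
     \<and> (\<forall>t x w. - \<Psi>t t x + f w * \<Psi>x t x - g w * \<Psi>xx t x = 0)
     \<and> (\<forall>t x. ((\<lambda>s. \<phi> t s 0) has_real_derivative \<Psi>x t x) (at x))
     \<and> (\<forall>t x. ((\<lambda>s. \<Psi>x t s) has_real_derivative \<Psi>xx t x) (at x))
     \<and> (\<forall>t x. ((\<lambda>s. \<phi> s x 0) has_real_derivative \<Psi>t t x) (at t))
     \<and> (\<forall>x b t s. ((\<lambda>s. \<phi> s (x + b * t - b * s) 0) has_real_derivative
            \<Psi>t s (x + b * t - b * s) - b * \<Psi>x s (x + b * t - b * s)) (at s))"
proof -
  define \<Phi> where "\<Phi> = (\<lambda>(t, x, w). \<phi> t x w)"
  have sPhi: "smooth_fun \<Phi>" using sub unfolding KS_subst_def \<Phi>_def by blast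
  define Dt where "Dt q = frechet_derivative \<Phi> (at q) (1, 0, 0)" for q
  define Dx where "Dx q = frechet_derivative \<Phi> (at q) (0, 1, 0)" for q
  define Du where "Du q = frechet_derivative \<Phi> (at q) (0, 0, 1)" for q
  have sDx: "smooth_fun Dx" unfolding Dx_def[abs_def] using smooth_D[OF sPhi] .
  define Dxx where "Dxx q = frechet_derivative Dx (at q) (0, 1, 0)" for q
  have core: "\<And>t0 x0 w c. - Dt (t0, x0, w) + f w * Dx (t0, x0, w) - g w * Dxx (t0, x0, w)
     + 2 * c * (- 2 * deriv g w * \<phi> t0 x0 w - 2 * g w * Du (t0, x0, w) - 2 * h w * \<phi> t0 x0 w) = 0"
    using only_if_core[OF sf sg sh sub] unfolding Dt_def Dx_def Du_def Dxx_def[abs_def] \<Phi>_def by blast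
  have R2: "\<And>t x w. - Dt (t, x, w) + f w * Dx (t, x, w) - g w * Dxx (t, x, w) = 0"
    using core[of _ _ _ 0] by simp
  have R1: "\<And>t x w. g w * Du (t, x, w) = - (deriv g w + h w) * \<phi> t x w"
  proof -
    fix t x w
    have "2 * 1 * (- 2 * deriv g w * \<phi> t x w - 2 * g w * Du (t, x, w) - 2 * h w * \<phi> t x w) = 0"
      using core[of t x w 1] R2[of t x w] by simp
    then show "g w * Du (t, x, w) = - (deriv g w + h w) * \<phi> t x w" by (simp add: algebra_simps)
  qed
  have dconst: "\<And>c r. ((\<lambda>r. c) has_real_derivative 0) (at r)" by simp
  have did: "\<And>r. ((\<lambda>r. r) has_real_derivative 1) (at r)" by simp
  have lineu: "\<And>t x w. ((\<lambda>s. \<phi> t x s) has_real_derivative Du (t, x, w)) (at w)"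
    using chain3[OF smooth_diff[OF sPhi] dconst dconst did] unfolding Du_def \<Phi>_def by simp
  have linet: "\<And>t x w. ((\<lambda>s. \<phi> s x w) has_real_derivative Dt (t, x, w)) (at t)"
    using chain3[OF smooth_diff[OF sPhi] did dconst dconst] unfolding Dt_def \<Phi>_def by simp
  have linex: "\<And>t x w. ((\<lambda>s. \<phi> t s w) has_real_derivative Dx (t, x, w)) (at x)"
    using chain3[OF smooth_diff[OF sPhi] dconst did dconst] unfolding Dx_def \<Phi>_def by simp
  have linexx: "\<And>t x w. ((\<lambda>s. Dx (t, s, w)) has_real_derivative Dxx (t, x, w)) (at x)"
    using chain3[OF smooth_diff[OF sDx] dconst did dconst] unfolding Dxx_def by simp
  define C where "C w = exp (P 0) * exp (- P w)" for w
  have sep: "\<And>t x w. \<phi> t x w = \<phi> t x 0 * C w"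
  proof -
    fix t x w
    define F where "F w = \<phi> t x w * exp (P w)" for w
    have "\<And>v. (F has_real_derivative 0) (at v)"
    proof -
      fix v
      have "(F has_real_derivative Du (t, x, v) * exp (P v) + \<phi> t x v * (exp (P v) * ((deriv g v + h v) / g v))) (at v)"
        unfolding F_def[abs_def]
        by (rule DERIV_cong, (rule DERIV_mult lineu DERIV_exp[THEN DERIV_chain2] dP[rule_format])+, simp add: algebra_simps)
      moreover have "Du (t, x, v) * exp (P v) + \<phi> t x v * (exp (P v) * ((deriv g v + h v) / g v)) = 0"
      proof -
        have "Du (t, x, v) = - ((deriv g v + h v) / g v) * \<phi> t x v"
          using R1[of v t x] gnz by (simp add: field_simps)
        then show ?thesis by (simp add: algebra_simps)
      qed
      ultimately show "(F has_real_derivative 0) (at v)" by simp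
    qed
    then have "F w = F 0" using DERIV_isconst_all by blast
    then have e: "\<phi> t x w * exp (P w) = \<phi> t x 0 * exp (P 0)" unfolding F_def .
    have "\<phi> t x w = \<phi> t x w * (exp (P w) * exp (- P w))" by (simp add: exp_minus)
    also have "\<dots> = (\<phi> t x w * exp (P w)) * exp (- P w)" by (simp only: mult.assoc)
    also have "\<dots> = \<phi> t x 0 * C w" unfolding e C_def by (simp only: mult.assoc)
    finally show "\<phi> t x w = \<phi> t x 0 * C w" .
  qed
  have Cnz: "\<And>w. C w \<noteq> 0" unfolding C_def by simp
  have Dt0: "\<And>t x w. Dt (t, x, w) = Dt (t, x, 0) * C w"
  proof -
    fix t x w
    have "((\<lambda>s. \<phi> s x 0 * C w) has_real_derivative Dt (t, x, 0) * C w) (at t)"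
      by (rule DERIV_cong, rule DERIV_mult[OF linet dconst], simp)
    moreover have "(\<lambda>s. \<phi> s x 0 * C w) = (\<lambda>s. \<phi> s x w)" by (rule ext) (rule sep[symmetric])
    ultimately show "Dt (t, x, w) = Dt (t, x, 0) * C w" using DERIV_unique[OF linet] by simp
  qed
  have Dx0: "\<And>t x w. Dx (t, x, w) = Dx (t, x, 0) * C w"
  proof -
    fix t x w
    have "((\<lambda>s. \<phi> t s 0 * C w) has_real_derivative Dx (t, x, 0) * C w) (at x)"
      by (rule DERIV_cong, rule DERIV_mult[OF linex dconst], simp)
    moreover have "(\<lambda>s. \<phi> t s 0 * C w) = (\<lambda>s. \<phi> t s w)" by (rule ext) (rule sep[symmetric])
    ultimately show "Dx (t, x, w) = Dx (t, x, 0) * C w" using DERIV_unique[OF linex] by simp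
  qed
  have Dxx0: "\<And>t x w. Dxx (t, x, w) = Dxx (t, x, 0) * C w"
  proof -
    fix t x w
    have "((\<lambda>s. Dx (t, s, 0) * C w) has_real_derivative Dxx (t, x, 0) * C w) (at x)"
      by (rule DERIV_cong, rule DERIV_mult[OF linexx dconst], simp)
    moreover have "(\<lambda>s. Dx (t, s, 0) * C w) = (\<lambda>s. Dx (t, s, w))" by (rule ext) (rule Dx0[symmetric])
    ultimately show "Dxx (t, x, w) = Dxx (t, x, 0) * C w" using DERIV_unique[OF linexx] by simp
  qed
  have pde: "\<And>t x w. - Dt (t, x, 0) + f w * Dx (t, x, 0) - g w * Dxx (t, x, 0) = 0"
  proof -
    fix t x w
    have "C w * (- Dt (t, x, 0) + f w * Dx (t, x, 0) - g w * Dxx (t, x, 0)) = 0"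
      using R2[of t x w] unfolding Dt0[of t x w] Dx0[of t x w] Dxx0[of t x w] by (simp add: algebra_simps)
    then show "- Dt (t, x, 0) + f w * Dx (t, x, 0) - g w * Dxx (t, x, 0) = 0" using Cnz by simp
  qed
  have tr: "\<And>x b t s. ((\<lambda>s. \<phi> s (x + b * t - b * s) 0) has_real_derivative
            Dt (s, x + b * t - b * s, 0) - b * Dx (s, x + b * t - b * s, 0)) (at s)"
  proof -
    fix x b t s
    have dX: "((\<lambda>s. x + b * t - b * s) has_real_derivative - b) (at s)" by (auto intro!: derivative_eq_intros)
    show "((\<lambda>s. \<phi> s (x + b * t - b * s) 0) has_real_derivative
            Dt (s, x + b * t - b * s, 0) - b * Dx (s, x + b * t - b * s, 0)) (at s)"
      using chain3[OF smooth_diff[OF sPhi] did dX dconst] unfolding Dt_def Dx_def \<Phi>_def by simp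
  qed
  have A: "\<forall>t x w. \<phi> t x w = \<phi> t x 0 * exp (P 0) * exp (- P w)"
  proof (intro allI)
    fix t x w
    show "\<phi> t x w = \<phi> t x 0 * exp (P 0) * exp (- P w)"
      using sep[of t x w] unfolding C_def by (simp only: mult.assoc)
  qed
  show ?thesis
  proof (intro exI conjI)
    show "\<forall>t x w. \<phi> t x w = \<phi> t x 0 * exp (P 0) * exp (- P w)" by (rule A)
    show "\<forall>t x w. - Dt (t, x, 0) + f w * Dx (t, x, 0) - g w * Dxx (t, x, 0) = 0" using pde by blast
    show "\<forall>t x. ((\<lambda>s. \<phi> t s 0) has_real_derivative Dx (t, x, 0)) (at x)" using linex by blast
    show "\<forall>t x. ((\<lambda>s. Dx (t, s, 0)) has_real_derivative Dxx (t, x, 0)) (at x)" using linexx by blast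
    show "\<forall>t x. ((\<lambda>s. \<phi> s x 0) has_real_derivative Dt (t, x, 0)) (at t)" using linet by blast
    show "\<forall>x b t s. ((\<lambda>s. \<phi> s (x + b * t - b * s) 0) has_real_derivative
            Dt (s, x + b * t - b * s, 0) - b * Dx (s, x + b * t - b * s, 0)) (at s)" using tr by blast
  qed
qed

lemma g_nonconst:
  fixes g :: "real \<Rightarrow> real"
  assumes "deriv g \<noteq> (\<lambda>w. 0)"
  shows "\<exists>w1 w2. g w1 \<noteq> g w2"
proof (rule ccontr)
  assume "\<not> (\<exists>w1 w2. g w1 \<noteq> g w2)"
  then have gc: "g = (\<lambda>w. g 0)" by auto
  have "deriv (\<lambda>w. g 0) = (\<lambda>w. 0)" by (rule ext, rule DERIV_imp_deriv, rule DERIV_const)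
  then have "deriv g = (\<lambda>w. 0)" using gc by metis
  then show False using assms by simp
qed

lemma ode_sol:
  fixes y y1 :: "real \<Rightarrow> real"
  assumes dy: "\<And>x. (y has_real_derivative y1 x) (at x)"
    and dy1: "\<And>x. (y1 has_real_derivative a * y1 x) (at x)"
  shows "(a \<noteq> 0 \<longrightarrow> (\<exists>c1 c2. \<forall>x. y x = c1 * exp (a * x) + c2))
       \<and> (a = 0 \<longrightarrow> (\<exists>c3 c4. \<forall>x. y x = c3 * x + c4))"
proof (intro conjI impI)
  assume a: "a \<noteq> 0"
  define z where "z x = y1 x * exp (- a * x)" for x
  have "\<And>x. (z has_real_derivative 0) (at x)"
  proof -
    fix x
    have "(z has_real_derivative a * y1 x * exp (- a * x) + y1 x * (exp (- a * x) * (- a * 1))) (at x)"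
      unfolding z_def[abs_def]
      by (rule DERIV_cong, (rule DERIV_mult dy1 DERIV_exp[THEN DERIV_chain2] DERIV_cmult DERIV_ident)+, simp)
    then show "(z has_real_derivative 0) (at x)" by (simp add: algebra_simps)
  qed
  then have zc: "\<And>x. z x = z 0" using DERIV_isconst_all by blast
  define K where "K = y1 0"
  have y1e: "\<And>x. y1 x = K * exp (a * x)"
  proof -
    fix x
    have h: "y1 x * exp (- a * x) = K" using zc[of x] unfolding z_def K_def by simp
    have one: "exp (- a * x) * exp (a * x) = 1" by (simp add: exp_minus)
    have "y1 x = y1 x * (exp (- a * x) * exp (a * x))" by (simp only: one mult_1_right)
    also have "\<dots> = (y1 x * exp (- a * x)) * exp (a * x)" by (simp only: mult.assoc)
    also have "\<dots> = K * exp (a * x)" by (simp only: h)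
    finally show "y1 x = K * exp (a * x)" .
  qed
  define G where "G x = y x - K / a * exp (a * x)" for x
  have "\<And>x. (G has_real_derivative 0) (at x)"
  proof -
    fix x
    have "(G has_real_derivative y1 x - K / a * (exp (a * x) * (a * 1))) (at x)"
      unfolding G_def[abs_def]
      by (rule DERIV_cong, (rule DERIV_diff DERIV_cmult dy DERIV_exp[THEN DERIV_chain2] DERIV_ident)+, simp)
    then show "(G has_real_derivative 0) (at x)" using a y1e[of x] by simp
  qed
  then have Gc: "\<And>x. G x = G 0" using DERIV_isconst_all by blast
  have "\<forall>x. y x = K / a * exp (a * x) + G 0"
  proof
    fix x
    have "y x - K / a * exp (a * x) = G 0" using Gc[of x] unfolding G_def[of x] .
    then show "y x = K / a * exp (a * x) + G 0" by linarith
  qed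
  then show "\<exists>c1 c2. \<forall>x. y x = c1 * exp (a * x) + c2" by blast
next
  assume a: "a = 0"
  have "\<And>x. (y1 has_real_derivative 0) (at x)" using dy1 a by simp
  then have y1c: "\<And>x. y1 x = y1 0" using DERIV_isconst_all by blast
  define G where "G x = y x - y1 0 * x" for x
  have "\<And>x. (G has_real_derivative 0) (at x)"
  proof -
    fix x
    have "(G has_real_derivative y1 x - y1 0 * 1) (at x)"
      unfolding G_def[abs_def]
      by (rule DERIV_diff[OF dy DERIV_cmult[OF DERIV_ident]])
    then show "(G has_real_derivative 0) (at x)" using y1c[of x] by simp
  qed
  then have Gc: "\<And>x. G x = G 0" using DERIV_isconst_all by blast
  have "\<forall>x. y x = y1 0 * x + G 0"
  proof
    fix x
    have "y x - y1 0 * x = G 0" using Gc[of x] unfolding G_def[of x] .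
    then show "y x = y1 0 * x + G 0" by linarith
  qed
  then show "\<exists>c3 c4. \<forall>x. y x = c3 * x + c4" by blast
qed

context
  fixes f g h P :: "real \<Rightarrow> real"
  assumes sf: "smooth_fun f" and sg: "smooth_fun g" and sh: "smooth_fun h"
    and gnz: "\<forall>w. g w \<noteq> 0"
    and dP: "\<forall>w. (P has_real_derivative ((deriv g w + h w) / g w)) (at w)"
    and dgnz: "deriv g \<noteq> (\<lambda>w. 0)"
begin

lemma nec_ab:
  assumes fab: "f = (\<lambda>w. a * g w + b)" and sub: "KS_subst f g h \<phi>"
  shows "(a \<noteq> 0 \<longrightarrow> (\<exists>c1 c2. (c1, c2) \<noteq> (0, 0) \<and> \<phi> = (\<lambda>t x w. (c1 * exp (a * x + a * b * t) + c2) * exp (- P w))))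
       \<and> (a = 0 \<longrightarrow> (\<exists>c3 c4. (c3, c4) \<noteq> (0, 0) \<and> \<phi> = (\<lambda>t x w. (c3 * (x + b * t) + c4) * exp (- P w))))"
proof -
  obtain \<Psi>t \<Psi>x \<Psi>xx where sep: "\<forall>t x w. \<phi> t x w = \<phi> t x 0 * exp (P 0) * exp (- P w)"
     and pde: "\<forall>t x w. - \<Psi>t t x + f w * \<Psi>x t x - g w * \<Psi>xx t x = 0"
     and lx: "\<forall>t x. ((\<lambda>s. \<phi> t s 0) has_real_derivative \<Psi>x t x) (at x)"
     and lxx: "\<forall>t x. ((\<lambda>s. \<Psi>x t s) has_real_derivative \<Psi>xx t x) (at x)"
     and tr: "\<forall>x b t s. ((\<lambda>s. \<phi> s (x + b * t - b * s) 0) has_real_derivative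
            \<Psi>t s (x + b * t - b * s) - b * \<Psi>x s (x + b * t - b * s)) (at s)"
    using nec[OF sf sg sh gnz dP sub] by blast
  obtain w1 w2 where w12: "g w1 \<noteq> g w2" using g_nonconst[OF dgnz] by blast
  have rel: "\<And>t x. \<Psi>xx t x = a * \<Psi>x t x \<and> \<Psi>t t x = b * \<Psi>x t x"
  proof -
    fix t x
    have e1: "- \<Psi>t t x + (a * g w1 + b) * \<Psi>x t x - g w1 * \<Psi>xx t x = 0" using pde fab by simp
    have e2: "- \<Psi>t t x + (a * g w2 + b) * \<Psi>x t x - g w2 * \<Psi>xx t x = 0" using pde fab by simp
    have "(g w1 - g w2) * (a * \<Psi>x t x - \<Psi>xx t x) = 0" using e1 e2 by (simp add: algebra_simps)
    then have "\<Psi>xx t x = a * \<Psi>x t x" using w12 by simp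
    then show "\<Psi>xx t x = a * \<Psi>x t x \<and> \<Psi>t t x = b * \<Psi>x t x" using e1 by (simp add: algebra_simps)
  qed
  have trans: "\<And>t x. \<phi> t x 0 = \<phi> 0 (x + b * t) 0"
  proof -
    fix t x
    have "\<And>s. ((\<lambda>s. \<phi> s (x + b * t - b * s) 0) has_real_derivative 0) (at s)"
    proof -
      fix s
      have "((\<lambda>s. \<phi> s (x + b * t - b * s) 0) has_real_derivative
            \<Psi>t s (x + b * t - b * s) - b * \<Psi>x s (x + b * t - b * s)) (at s)" using tr by blast
      then show "((\<lambda>s. \<phi> s (x + b * t - b * s) 0) has_real_derivative 0) (at s)" using rel by simp
    qed
    then have "\<phi> t (x + b * t - b * t) 0 = \<phi> 0 (x + b * t - b * 0) 0"
      using DERIV_isconst_all[of "\<lambda>s. \<phi> s (x + b * t - b * s) 0"] by blast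
    then show "\<phi> t x 0 = \<phi> 0 (x + b * t) 0" by simp
  qed
  have dy: "\<And>x. ((\<lambda>s. \<phi> 0 s 0) has_real_derivative \<Psi>x 0 x) (at x)" using lx by blast
  have dy1: "\<And>x. (\<Psi>x 0 has_real_derivative a * \<Psi>x 0 x) (at x)" using lxx rel by metis
  note os = ode_sol[OF dy dy1]
  have pf: "\<And>t x w. \<phi> t x w = \<phi> 0 (x + b * t) 0 * exp (P 0) * exp (- P w)"
    using sep trans by metis
  have phinz: "\<phi> \<noteq> (\<lambda>t x w. 0)" using sub unfolding KS_subst_def by blast
  show ?thesis
  proof (intro conjI impI)
    assume a: "a \<noteq> 0"
    then obtain c1 c2 where y: "\<forall>x. \<phi> 0 x 0 = c1 * exp (a * x) + c2" using os by blast
    define d1 where "d1 = c1 * exp (P 0)"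
    define d2 where "d2 = c2 * exp (P 0)"
    have eq: "\<phi> = (\<lambda>t x w. (d1 * exp (a * x + a * b * t) + d2) * exp (- P w))"
    proof (intro ext)
      fix t x w
      have "\<phi> t x w = (c1 * exp (a * (x + b * t)) + c2) * exp (P 0) * exp (- P w)"
        using pf[of t x w] y by simp
      then show "\<phi> t x w = (d1 * exp (a * x + a * b * t) + d2) * exp (- P w)"
        unfolding d1_def d2_def by (simp add: algebra_simps)
    qed
    moreover have "(d1, d2) \<noteq> (0, 0)"
    proof
      assume "(d1, d2) = (0, 0)"
      then have "\<phi> = (\<lambda>t x w. 0)" unfolding eq by simp
      then show False using phinz by simp
    qed
    ultimately show "\<exists>c1 c2. (c1, c2) \<noteq> (0, 0) \<and> \<phi> = (\<lambda>t x w. (c1 * exp (a * x + a * b * t) + c2) * exp (- P w))"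
      by blast
  next
    assume a: "a = 0"
    then obtain c3 c4 where y: "\<forall>x. \<phi> 0 x 0 = c3 * x + c4" using os by blast
    define d1 where "d1 = c3 * exp (P 0)"
    define d2 where "d2 = c4 * exp (P 0)"
    have eq: "\<phi> = (\<lambda>t x w. (d1 * (x + b * t) + d2) * exp (- P w))"
    proof (intro ext)
      fix t x w
      have "\<phi> t x w = (c3 * (x + b * t) + c4) * exp (P 0) * exp (- P w)"
        using pf[of t x w] y by simp
      then show "\<phi> t x w = (d1 * (x + b * t) + d2) * exp (- P w)"
        unfolding d1_def d2_def by (simp add: algebra_simps)
    qed
    moreover have "(d1, d2) \<noteq> (0, 0)"
    proof
      assume "(d1, d2) = (0, 0)"
      then have "\<phi> = (\<lambda>t x w. 0)" unfolding eq by simp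
      then show False using phinz by simp
    qed
    ultimately show "\<exists>c3 c4. (c3, c4) \<noteq> (0, 0) \<and> \<phi> = (\<lambda>t x w. (c3 * (x + b * t) + c4) * exp (- P w))"
      by blast
  qed
qed

lemma nec_iii:
  assumes nab: "\<not> (\<exists>a b. f = (\<lambda>w. a * g w + b))" and sub: "KS_subst f g h \<phi>"
  shows "\<exists>c5. c5 \<noteq> 0 \<and> \<phi> = (\<lambda>t x w. c5 * exp (- P w))"
proof -
  obtain \<Psi>t \<Psi>x \<Psi>xx where sep: "\<forall>t x w. \<phi> t x w = \<phi> t x 0 * exp (P 0) * exp (- P w)"
     and pde: "\<forall>t x w. - \<Psi>t t x + f w * \<Psi>x t x - g w * \<Psi>xx t x = 0"
     and lx: "\<forall>t x. ((\<lambda>s. \<phi> t s 0) has_real_derivative \<Psi>x t x) (at x)"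
     and lt: "\<forall>t x. ((\<lambda>s. \<phi> s x 0) has_real_derivative \<Psi>t t x) (at t)"
    using nec[OF sf sg sh gnz dP sub] by blast
  obtain w1 w2 where w12: "g w1 \<noteq> g w2" using g_nonconst[OF dgnz] by blast
  have z: "\<And>t x. \<Psi>x t x = 0 \<and> \<Psi>t t x = 0"
  proof -
    fix t x
    define A where "A = \<Psi>t t x"
    define B where "B = \<Psi>x t x"
    define Cc where "Cc = \<Psi>xx t x"
    have e: "\<And>w. - A + f w * B - g w * Cc = 0" using pde unfolding A_def B_def Cc_def by blast
    have C0: "Cc = 0"
    proof (rule ccontr)
      assume Cnz: "Cc \<noteq> 0"
      show False
      proof (cases "B = 0")
        case True
        then have "\<And>w. g w = - A / Cc" using e Cnz by (simp add: field_simps)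
        then show False using w12 by simp
      next
        case False
        then have "\<And>w. f w = (Cc / B) * g w + A / B" using e by (simp add: field_simps)
        then have "f = (\<lambda>w. (Cc / B) * g w + A / B)" by (simp add: fun_eq_iff)
        then show False using nab by blast
      qed
    qed
    have B0: "B = 0"
    proof (rule ccontr)
      assume "B \<noteq> 0"
      then have "\<And>w. f w = 0 * g w + A / B" using e C0 by (simp add: field_simps)
      then have "f = (\<lambda>w. 0 * g w + A / B)" by (simp add: fun_eq_iff)
      then show False using nab by blast
    qed
    have "A = 0" using e[of 0] B0 C0 by simp
    then show "\<Psi>x t x = 0 \<and> \<Psi>t t x = 0" using B0 unfolding A_def B_def by simp
  qed
  have c1: "\<And>t x. \<phi> t x 0 = \<phi> 0 x 0"
  proof -
    fix t x
    have "\<And>s. ((\<lambda>s. \<phi> s x 0) has_real_derivative 0) (at s)" using lt z by metis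
    then show "\<phi> t x 0 = \<phi> 0 x 0" using DERIV_isconst_all by blast
  qed
  have c2: "\<And>x. \<phi> 0 x 0 = \<phi> 0 0 0"
  proof -
    fix x
    have "\<And>s. ((\<lambda>s. \<phi> 0 s 0) has_real_derivative 0) (at s)" using lx z by metis
    then show "\<phi> 0 x 0 = \<phi> 0 0 0" using DERIV_isconst_all by blast
  qed
  define c5 where "c5 = \<phi> 0 0 0 * exp (P 0)"
  have eq: "\<phi> = (\<lambda>t x w. c5 * exp (- P w))"
  proof (intro ext)
    fix t x w
    have "\<phi> t x w = \<phi> 0 0 0 * exp (P 0) * exp (- P w)"
      using sep[rule_format, of t x w] c1[of t x] c2[of x] by simp
    then show "\<phi> t x w = c5 * exp (- P w)" unfolding c5_def .
  qed
  have phinz: "\<phi> \<noteq> (\<lambda>t x w. 0)" using sub unfolding KS_subst_def by blast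
  have "c5 \<noteq> 0"
  proof
    assume "c5 = 0"
    then have "\<phi> = (\<lambda>t x w. 0)" unfolding eq by simp
    then show False using phinz by simp
  qed
  then show ?thesis using eq by blast
qed

end

theorem theorem1:
  fixes f g h :: "real \<Rightarrow> real"
  assumes "smooth_fun f" and "smooth_fun g" and "smooth_fun h"
    and "f \<noteq> (\<lambda>w. 0)"
    and "\<forall>w. g w \<noteq> 0"
    and "deriv g \<noteq> (\<lambda>w. 0)"
  shows "KS_nonlin_self_adjoint f g h \<and>
    (\<forall>P. (\<forall>w. (P has_real_derivative ((deriv g w + h w) / g w)) (at w)) \<longrightarrow>
       (\<forall>a b. f = (\<lambda>w. a * g w + b) \<and> \<not> (\<exists>c. f = (\<lambda>w. c)) \<longrightarrow>
          (\<forall>\<phi>. KS_subst f g h \<phi> \<longleftrightarrow>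
             (\<exists>c1 c2. (c1, c2) \<noteq> (0, 0) \<and>
                \<phi> = (\<lambda>t x w. (c1 * exp (a * x + a * b * t) + c2) * exp (- P w))))) \<and>
       (\<forall>b. f = (\<lambda>w. b) \<longrightarrow>
          (\<forall>\<phi>. KS_subst f g h \<phi> \<longleftrightarrow>
             (\<exists>c3 c4. (c3, c4) \<noteq> (0, 0) \<and>
                \<phi> = (\<lambda>t x w. (c3 * (x + b * t) + c4) * exp (- P w))))) \<and>
       (\<not> (\<exists>a b. f = (\<lambda>w. a * g w + b)) \<longrightarrow>
          (\<forall>\<phi>. KS_subst f g h \<phi> \<longleftrightarrow>
             (\<exists>c5. c5 \<noteq> 0 \<and> \<phi> = (\<lambda>t x w. c5 * exp (- P w))))))"
proof -
  note sf = assms(1) and sg = assms(2) and sh = assms(3) and gnz = assms(5) and dgnz = assms(6)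
  obtain P0 where dP0: "\<forall>w. (P0 has_real_derivative ((deriv g w + h w) / g w)) (at w)"
    using P_exists[OF sg sh gnz] by blast
  have C1: "KS_nonlin_self_adjoint f g h"
    unfolding KS_nonlin_self_adjoint_def using if_iii[OF sf sg sh gnz dP0, of 1] by (intro exI[of _ "\<lambda>t x w. 1 * exp (- P0 w)"]) simp
  have C2: "\<forall>P. (\<forall>w. (P has_real_derivative ((deriv g w + h w) / g w)) (at w)) \<longrightarrow>
       (\<forall>a b. f = (\<lambda>w. a * g w + b) \<and> \<not> (\<exists>c. f = (\<lambda>w. c)) \<longrightarrow>
          (\<forall>\<phi>. KS_subst f g h \<phi> \<longleftrightarrow>
             (\<exists>c1 c2. (c1, c2) \<noteq> (0, 0) \<and>
                \<phi> = (\<lambda>t x w. (c1 * exp (a * x + a * b * t) + c2) * exp (- P w))))) \<and>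
       (\<forall>b. f = (\<lambda>w. b) \<longrightarrow>
          (\<forall>\<phi>. KS_subst f g h \<phi> \<longleftrightarrow>
             (\<exists>c3 c4. (c3, c4) \<noteq> (0, 0) \<and>
                \<phi> = (\<lambda>t x w. (c3 * (x + b * t) + c4) * exp (- P w))))) \<and>
       (\<not> (\<exists>a b. f = (\<lambda>w. a * g w + b)) \<longrightarrow>
          (\<forall>\<phi>. KS_subst f g h \<phi> \<longleftrightarrow>
             (\<exists>c5. c5 \<noteq> 0 \<and> \<phi> = (\<lambda>t x w. c5 * exp (- P w)))))"
  proof (rule allI, rule impI, intro conjI)
    fix P assume dP: "\<forall>w. (P has_real_derivative ((deriv g w + h w) / g w)) (at w)"
    show "\<forall>a b. f = (\<lambda>w. a * g w + b) \<and> \<not> (\<exists>c. f = (\<lambda>w. c)) \<longrightarrow>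
          (\<forall>\<phi>. KS_subst f g h \<phi> \<longleftrightarrow>
             (\<exists>c1 c2. (c1, c2) \<noteq> (0, 0) \<and>
                \<phi> = (\<lambda>t x w. (c1 * exp (a * x + a * b * t) + c2) * exp (- P w))))"
    proof (intro allI impI)
      fix a b \<phi>
      assume H: "f = (\<lambda>w. a * g w + b) \<and> \<not> (\<exists>c. f = (\<lambda>w. c))"
      then have fab: "f = (\<lambda>w. a * g w + b)" by blast
      have a0: "a \<noteq> 0"
      proof
        assume "a = 0"
        then have "f = (\<lambda>w. b)" using fab by simp
        then show False using H by blast
      qed
      show "KS_subst f g h \<phi> \<longleftrightarrow>
             (\<exists>c1 c2. (c1, c2) \<noteq> (0, 0) \<and>
                \<phi> = (\<lambda>t x w. (c1 * exp (a * x + a * b * t) + c2) * exp (- P w)))"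
      proof
        assume sub: "KS_subst f g h \<phi>"
        show "\<exists>c1 c2. (c1, c2) \<noteq> (0, 0) \<and> \<phi> = (\<lambda>t x w. (c1 * exp (a * x + a * b * t) + c2) * exp (- P w))"
          using nec_ab[OF sf sg sh gnz dP dgnz fab sub] a0 by blast
      next
        assume "\<exists>c1 c2. (c1, c2) \<noteq> (0, 0) \<and> \<phi> = (\<lambda>t x w. (c1 * exp (a * x + a * b * t) + c2) * exp (- P w))"
        then obtain c1 c2 where nz: "(c1, c2) \<noteq> (0, 0)"
          and e: "\<phi> = (\<lambda>t x w. (c1 * exp (a * x + a * b * t) + c2) * exp (- P w))" by blast
        show "KS_subst f g h \<phi>" unfolding e by (rule if_i[OF sf sg sh gnz dP fab a0 nz])
      qed
    qed
    show "\<forall>b. f = (\<lambda>w. b) \<longrightarrow>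
          (\<forall>\<phi>. KS_subst f g h \<phi> \<longleftrightarrow>
             (\<exists>c3 c4. (c3, c4) \<noteq> (0, 0) \<and>
                \<phi> = (\<lambda>t x w. (c3 * (x + b * t) + c4) * exp (- P w))))"
    proof (intro allI impI)
      fix b \<phi>
      assume fb: "f = (\<lambda>w. b)"
      then have fab: "f = (\<lambda>w. 0 * g w + b)" by simp
      show "KS_subst f g h \<phi> \<longleftrightarrow>
             (\<exists>c3 c4. (c3, c4) \<noteq> (0, 0) \<and>
                \<phi> = (\<lambda>t x w. (c3 * (x + b * t) + c4) * exp (- P w)))"
      proof
        assume sub: "KS_subst f g h \<phi>"
        show "\<exists>c3 c4. (c3, c4) \<noteq> (0, 0) \<and> \<phi> = (\<lambda>t x w. (c3 * (x + b * t) + c4) * exp (- P w))"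
          using nec_ab[OF sf sg sh gnz dP dgnz fab sub] by blast
      next
        assume "\<exists>c3 c4. (c3, c4) \<noteq> (0, 0) \<and> \<phi> = (\<lambda>t x w. (c3 * (x + b * t) + c4) * exp (- P w))"
        then obtain c3 c4 where nz: "(c3, c4) \<noteq> (0, 0)"
          and e: "\<phi> = (\<lambda>t x w. (c3 * (x + b * t) + c4) * exp (- P w))" by blast
        show "KS_subst f g h \<phi>" unfolding e by (rule if_ii[OF sf sg sh gnz dP fb nz])
      qed
    qed
    show "\<not> (\<exists>a b. f = (\<lambda>w. a * g w + b)) \<longrightarrow>
          (\<forall>\<phi>. KS_subst f g h \<phi> \<longleftrightarrow>
             (\<exists>c5. c5 \<noteq> 0 \<and> \<phi> = (\<lambda>t x w. c5 * exp (- P w))))"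
    proof (intro allI impI)
      fix \<phi>
      assume nab: "\<not> (\<exists>a b. f = (\<lambda>w. a * g w + b))"
      show "KS_subst f g h \<phi> \<longleftrightarrow> (\<exists>c5. c5 \<noteq> 0 \<and> \<phi> = (\<lambda>t x w. c5 * exp (- P w)))"
      proof
        assume sub: "KS_subst f g h \<phi>"
        show "\<exists>c5. c5 \<noteq> 0 \<and> \<phi> = (\<lambda>t x w. c5 * exp (- P w))"
          by (rule nec_iii[OF sf sg sh gnz dP dgnz nab sub])
      next
        assume "\<exists>c5. c5 \<noteq> 0 \<and> \<phi> = (\<lambda>t x w. c5 * exp (- P w))"
        then obtain c5 where nz: "c5 \<noteq> 0" and e: "\<phi> = (\<lambda>t x w. c5 * exp (- P w))" by blast
        show "KS_subst f g h \<phi>" unfolding e by (rule if_iii[OF sf sg sh gnz dP nz])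
      qed
    qed
  qed
  show ?thesis using C1 C2 by blast
qed

end
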